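(* Let $N\in(\mathbb{N}^* )^m$, $I\subseteq\{1,\dots,m\}$, and let $A\subseteq F_I(\Gamma^m)$ be a non-closed monohedral largely continuous precell mod $N$. Then for every integer $n\geq1$ there exist $N'\in(\mathbb{N}^* )^m$ and a partition $(A_i)_{1\leq i\leq n}$ of $A$ into largely continuous precells mod $N'$ such that $\partial A_i=\partial A$ for $1\leq i\leq n$.
   Context: $\mathcal{Z}$ is a $\mathbb{Z}$-group (linearly ordered abelian group with smallest positive element $1$, $|\mathcal{Z}/n\mathcal{Z}|=n$ for all $n\geq1$), $\mathcal{Q}$ its divisible hull, $\Gamma=\mathcal{Z}\cup\{+\infty\}$, $\Omega=\mathcal{Q}\cup\{+\infty\}$, $+\infty$ maximal and absorbing for $+$. Topology on $\Omega$ generated by open intervals and $]a,+\infty]$; product topology on $\Omega^m$; $\overline A$ closure; $A$ closed iff $A=\overline A$; frontier $\partial A$ = closure of $\overline A\setminus A$. $F_K(\Gamma^m)$: points whose non-$+\infty$ coordinates are exactly those in $K$; $F_K(A)=\overline A\cap F_K(\Gamma^m)$, a face when non-empty; $A$ is monohedral if its faces are linearly ordered by $B\leq C$ iff $B\subseteq\overline C$. Socle $\widehat a=(a_1,\dots,a_{m-1})$, $\widehat A$, $\widehat N$. Congruence: $a\equiv b\,[n]$ iff $a-b\in n\mathcal{Z}$, and $a\equiv+\infty\,[n]$ always. For $Y\subseteq F_K(\Gamma^k)$, $g:Y\to\Omega$ is affine if constantly $+\infty$ or $g(y)=\alpha_0+\sum_{i\in K}\alpha_iy_i$ ($\alpha_0\in\mathcal{Q}$,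 $\alpha_i\in\mathbb{Q}$); largely continuous if it extends continuously to $\overline Y$. Largely continuous precells mod $N$: $\Gamma^0$ for $m=0$; for $m\geq1$, $A\subseteq F_I(\Gamma^m)$ such that $\widehat A$ is a largely continuous precell mod $\widehat N$ and for some non-negative largely continuous affine $\mu,\nu:\widehat A\to\Omega$ and integer $0\leq\rho<N_m$, $A=\{a\in F_I(\Gamma^m):\widehat a\in\widehat A,\ \mu(\widehat a)\leq a_m\leq\nu(\widehat a),\ a_m\equiv\rho\,[N_m]\}$. *)

theory Defs
  imports Main "HOL.Rat"
begin

text \<open>A Z-group is represented as an additive subgroup Z of a linearly ordered
field 'k whose smallest positive element is the field's 1 and with |Z/nZ| = n.\<close>

definition nmult :: "'k::linordered_field set \<Rightarrow> nat \<Rightarrow> 'k set" where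
  "nmult Z n = {of_nat n * z | z. z \<in> Z}"

definition Zgroup :: "'k::linordered_field set \<Rightarrow> bool" where
  "Zgroup Z \<longleftrightarrow> 0 \<in> Z \<and> (\<forall>x\<in>Z. \<forall>y\<in>Z. x + y \<in> Z \<and> - x \<in> Z)
     \<and> 1 \<in> Z \<and> (\<forall>z\<in>Z. 0 < z \<longrightarrow> 1 \<le> z)
     \<and> (\<forall>n::nat. n \<ge> 1 \<longrightarrow>
          card (Z // {(x, y). x \<in> Z \<and> y \<in> Z \<and> x - y \<in> nmult Z n}) = n)"

definition divhull :: "'k::linordered_field set \<Rightarrow> 'k set" where
  "divhull Z = {q. \<exists>n::nat. n \<ge> 1 \<and> of_nat n * q \<in> Z}"

datatype 'a ext = Fin 'a | PInf

instantiation ext :: (linorder) linorder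
begin
fun less_eq_ext :: "'a ext \<Rightarrow> 'a ext \<Rightarrow> bool" where
  "less_eq_ext (Fin a) (Fin b) = (a \<le> b)"
| "less_eq_ext _ PInf = True"
| "less_eq_ext PInf (Fin _) = False"
definition less_ext :: "'a ext \<Rightarrow> 'a ext \<Rightarrow> bool" where
  "less_ext x y = (x \<le> y \<and> \<not> y \<le> x)"
instance
proof
  fix x y z :: "'a ext"
  show "(x < y) = (x \<le> y \<and> \<not> y \<le> x)" by (simp add: less_ext_def)
  show "x \<le> x" by (cases x) auto
  show "x \<le> y \<Longrightarrow> y \<le> z \<Longrightarrow> x \<le> z"
    by (cases x; cases y; cases z) auto
  show "x \<le> y \<Longrightarrow> y \<le> x \<Longrightarrow> x = y"
    by (cases x; cases y) auto
  show "x \<le> y \<or> y \<le> x" by (cases x; cases y) auto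
qed
end

fun fin_val :: "'a::zero ext \<Rightarrow> 'a" where
  "fin_val (Fin a) = a"
| "fin_val PInf = 0"

text \<open>Gamma = Z with +infinity, Omega = Q with +infinity.\<close>
definition gam :: "'k::linordered_field set \<Rightarrow> 'k ext set" where
  "gam Z = Fin ` Z \<union> {PInf}"

definition omg :: "'k::linordered_field set \<Rightarrow> 'k ext set" where
  "omg Z = Fin ` divhull Z \<union> {PInf}"

fun cong_ext :: "'k::linordered_field set \<Rightarrow> nat \<Rightarrow> 'k ext \<Rightarrow> 'k ext \<Rightarrow> bool" where
  "cong_ext Z n (Fin a) (Fin b) = (a - b \<in> nmult Z n)"
| "cong_ext Z n _ _ = True"

definition basic_open :: "'k::linordered_field set \<Rightarrow> 'k ext set \<Rightarrow> bool" where
  "basic_open Z S \<longleftrightarrow>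
     (\<exists>a\<in>omg Z. \<exists>b\<in>omg Z. S = {y \<in> omg Z. a < y \<and> y < b})
   \<or> (\<exists>a\<in>omg Z. S = {y \<in> omg Z. a < y})"

definition basic_nbhd :: "'k::linordered_field set \<Rightarrow> nat \<Rightarrow> 'k ext list \<Rightarrow> 'k ext set list \<Rightarrow> bool" where
  "basic_nbhd Z m x Ss \<longleftrightarrow> length Ss = m \<and> (\<forall>i<m. basic_open Z (Ss ! i) \<and> x ! i \<in> Ss ! i)"

definition clos :: "'k::linordered_field set \<Rightarrow> nat \<Rightarrow> 'k ext list set \<Rightarrow> 'k ext list set" where
  "clos Z m A = {x. length x = m \<and> set x \<subseteq> omg Z \<and>
     (\<forall>Ss. basic_nbhd Z m x Ss \<longrightarrow> (\<exists>a\<in>A. \<forall>i<m. a ! i \<in> Ss ! i))}"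

definition is_closed :: "'k::linordered_field set \<Rightarrow> nat \<Rightarrow> 'k ext list set \<Rightarrow> bool" where
  "is_closed Z m A \<longleftrightarrow> A = clos Z m A"

definition frontier_set :: "'k::linordered_field set \<Rightarrow> nat \<Rightarrow> 'k ext list set \<Rightarrow> 'k ext list set" where
  "frontier_set Z m A = clos Z m (clos Z m A - A)"

text \<open>F_K(Gamma^m); indices are 0..m-1 instead of 1..m.\<close>
definition Fgam :: "'k::linordered_field set \<Rightarrow> nat \<Rightarrow> nat set \<Rightarrow> 'k ext list set" where
  "Fgam Z m K = {a. length a = m \<and> set a \<subseteq> gam Z \<and> {i. i < m \<and> a ! i \<noteq> PInf} = K}"

definition Fface :: "'k::linordered_field set \<Rightarrow> nat \<Rightarrow> nat set \<Rightarrow> 'k ext list set \<Rightarrow> 'k ext list set" where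
  "Fface Z m K A = clos Z m A \<inter> Fgam Z m K"

definition faces :: "'k::linordered_field set \<Rightarrow> nat \<Rightarrow> 'k ext list set \<Rightarrow> 'k ext list set set" where
  "faces Z m A = {F. \<exists>K. K \<subseteq> {0..<m} \<and> F = Fface Z m K A \<and> F \<noteq> {}}"

definition monohedral :: "'k::linordered_field set \<Rightarrow> nat \<Rightarrow> 'k ext list set \<Rightarrow> bool" where
  "monohedral Z m A \<longleftrightarrow>
     linear_order_on (faces Z m A)
       {(B, C). B \<in> faces Z m A \<and> C \<in> faces Z m A \<and> B \<subseteq> clos Z m C}"

definition affine_on :: "'k::linordered_field set \<Rightarrow> nat set \<Rightarrow> 'k ext list set \<Rightarrow> ('k ext list \<Rightarrow> 'k ext) \<Rightarrow> bool" where
  "affine_on Z K Y g \<longleftrightarrow>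
     (\<forall>y\<in>Y. g y = PInf)
   \<or> (\<exists>\<alpha>0 \<in> divhull Z. \<exists>\<alpha> :: nat \<Rightarrow> rat.
        \<forall>y\<in>Y. g y = Fin (\<alpha>0 + (\<Sum>i\<in>K. of_rat (\<alpha> i) * fin_val (y ! i))))"

definition largely_cont :: "'k::linordered_field set \<Rightarrow> nat \<Rightarrow> 'k ext list set \<Rightarrow> ('k ext list \<Rightarrow> 'k ext) \<Rightarrow> bool" where
  "largely_cont Z k Y g \<longleftrightarrow>
     (\<exists>G. (\<forall>y\<in>Y. G y = g y) \<and> (\<forall>x\<in>clos Z k Y. G x \<in> omg Z) \<and>
        (\<forall>x\<in>clos Z k Y. \<forall>S. basic_open Z S \<and> G x \<in> S \<longrightarrow>
           (\<exists>Ss. basic_nbhd Z k x Ss \<and>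
              (\<forall>y\<in>clos Z k Y. (\<forall>i<k. y ! i \<in> Ss ! i) \<longrightarrow> G y \<in> S))))"

fun lcp_rev :: "'k::linordered_field set \<Rightarrow> nat list \<Rightarrow> 'k ext list set \<Rightarrow> bool" where
  "lcp_rev Z [] A = (A = {[]})"
| "lcp_rev Z (n # Ns) A =
    (\<exists>I. I \<subseteq> {0..<Suc (length Ns)} \<and> A \<subseteq> Fgam Z (Suc (length Ns)) I \<and>
       lcp_rev Z Ns (butlast ` A) \<and>
       (\<exists>\<mu> \<nu> (\<rho>::nat).
          affine_on Z {i \<in> I. i < length Ns} (butlast ` A) \<mu> \<and>
          affine_on Z {i \<in> I. i < length Ns} (butlast ` A) \<nu> \<and>
          largely_cont Z (length Ns) (butlast ` A) \<mu> \<and>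
          largely_cont Z (length Ns) (butlast ` A) \<nu> \<and>
          (\<forall>y\<in>butlast ` A. Fin 0 \<le> \<mu> y \<and> Fin 0 \<le> \<nu> y) \<and>
          \<rho> < n \<and>
          A = {a \<in> Fgam Z (Suc (length Ns)) I. butlast a \<in> butlast ` A \<and>
                 \<mu> (butlast a) \<le> a ! length Ns \<and> a ! length Ns \<le> \<nu> (butlast a) \<and>
                 cong_ext Z n (a ! length Ns) (Fin (of_nat \<rho>))}))"

definition lc_precell :: "'k::linordered_field set \<Rightarrow> nat list \<Rightarrow> 'k ext list set \<Rightarrow> bool" where
  "lc_precell Z N A = lcp_rev Z (rev N) A"

end

theory Submission
  imports Defs
begin


locale zg =
  fixes Z :: "'k::linordered_field set"
  assumes ZG: "Zgroup Z"
begin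

lemma Z0: "0 \<in> Z" using ZG by (simp add: Zgroup_def)
lemma Zadd: "x \<in> Z \<Longrightarrow> y \<in> Z \<Longrightarrow> x + y \<in> Z" using ZG by (simp add: Zgroup_def)
lemma Zneg: "x \<in> Z \<Longrightarrow> - x \<in> Z" using ZG by (simp add: Zgroup_def)
lemma Z1: "1 \<in> Z" using ZG by (simp add: Zgroup_def)
lemma Zpos: "z \<in> Z \<Longrightarrow> 0 < z \<Longrightarrow> 1 \<le> z" using ZG by (simp add: Zgroup_def)
lemma Zdiff: "x \<in> Z \<Longrightarrow> y \<in> Z \<Longrightarrow> x - y \<in> Z"
  using Zadd[of x "-y"] Zneg[of y] by simp

lemma Zsmall: "z \<in> Z \<Longrightarrow> \<bar>z\<bar> < 1 \<Longrightarrow> z = 0"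
proof -
  assume z: "z \<in> Z" "\<bar>z\<bar> < 1"
  show "z = 0"
  proof (rule ccontr)
    assume "z \<noteq> 0"
    then have "0 < z \<or> 0 < -z" by auto
    then show False using Zpos[OF z(1)] Zpos[OF Zneg[OF z(1)]] z(2) by (auto simp: abs_if split: if_splits)
  qed
qed

lemma Znat: "z \<in> Z \<Longrightarrow> of_nat n * z \<in> Z"
  by (induction n) (auto simp: Z0 distrib_right intro: Zadd)

lemma Zint: "z \<in> Z \<Longrightarrow> of_int c * z \<in> Z"
proof -
  assume z: "z \<in> Z"
  show ?thesis
  proof (cases "c \<ge> 0")
    case True
    then show ?thesis using Znat[OF z, of "nat c"] by simp
  next
    case False
    then have "of_int c * z = - (of_nat (nat (-c)) * z)" by simp
    then show ?thesis using Zneg[OF Znat[OF z, of "nat (-c)"]] by simp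
  qed
qed

lemma Zofint: "of_int c \<in> Z" using Zint[OF Z1, of c] by simp
lemma Zofnat: "of_nat c \<in> Z" using Znat[OF Z1, of c] by simp

lemma Zsum: "finite S \<Longrightarrow> (\<And>i. i \<in> S \<Longrightarrow> f i \<in> Z) \<Longrightarrow> sum f S \<in> Z"
  by (induction S rule: finite_induct) (auto simp: Z0 intro: Zadd)

lemma Zdivhull: "z \<in> Z \<Longrightarrow> z \<in> divhull Z"
  unfolding divhull_def by (auto intro!: exI[of _ "1::nat"])

lemma dh_add: "x \<in> divhull Z \<Longrightarrow> y \<in> divhull Z \<Longrightarrow> x + y \<in> divhull Z"
proof -
  assume "x \<in> divhull Z" "y \<in> divhull Z"
  then obtain a b :: nat where a: "a \<ge> 1" "of_nat a * x \<in> Z" and b: "b \<ge> 1" "of_nat b * y \<in> Z"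
    unfolding divhull_def by auto
  have e: "of_nat (a*b) * (x + y) = of_nat b * (of_nat a * x) + of_nat a * (of_nat b * y)"
    by (simp add: algebra_simps)
  have "of_nat (a*b) * (x + y) \<in> Z" unfolding e by (rule Zadd[OF Znat[OF a(2)] Znat[OF b(2)]])
  moreover have "a * b \<ge> 1" using a b by (simp add: Suc_le_eq)
  ultimately show ?thesis unfolding divhull_def by (intro CollectI exI[where x="a*b"] conjI)
qed

lemma dh_neg: "x \<in> divhull Z \<Longrightarrow> - x \<in> divhull Z"
proof -
  assume "x \<in> divhull Z"
  then obtain a :: nat where a: "a \<ge> 1" "of_nat a * x \<in> Z" unfolding divhull_def by auto
  have "of_nat a * (- x) = - (of_nat a * x)" by simp
  then have "of_nat a * (- x) \<in> Z" using Zneg[OF a(2)] by simp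
  then show ?thesis using a(1) unfolding divhull_def by blast
qed

lemma dh_diff: "x \<in> divhull Z \<Longrightarrow> y \<in> divhull Z \<Longrightarrow> x - y \<in> divhull Z"
  using dh_add[of x "-y"] dh_neg[of y] by simp

lemma dh_inv: "d \<ge> 1 \<Longrightarrow> 1 / of_nat d \<in> divhull Z"
proof -
  assume d: "d \<ge> 1"
  then have "of_nat d * (1 / of_nat d) = (1::'k)" by simp
  then have "of_nat d * (1 / of_nat d) \<in> Z" using Z1 by simp
  then show ?thesis using d unfolding divhull_def by blast
qed

lemma dh_int: "of_int c \<in> divhull Z" using Zdivhull Zofint by blast

lemma dh_max: "x \<in> divhull Z \<Longrightarrow> y \<in> divhull Z \<Longrightarrow> max x y \<in> divhull Z"
  by (simp add: max_def)
lemma dh_min: "x \<in> divhull Z \<Longrightarrow> y \<in> divhull Z \<Longrightarrow> min x y \<in> divhull Z"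
  by (simp add: min_def)

definition Rel :: "nat \<Rightarrow> ('k \<times> 'k) set" where
  "Rel n = {(x, y). x \<in> Z \<and> y \<in> Z \<and> x - y \<in> nmult Z n}"

lemma nmult_iff: "x \<in> nmult Z n \<longleftrightarrow> (\<exists>z\<in>Z. x = of_nat n * z)"
  unfolding nmult_def by auto

lemma equiv_Rel: "equiv Z (Rel n)"
proof (rule equivI)
  show "Rel n \<subseteq> Z \<times> Z" unfolding Rel_def by auto
  show "refl_on Z (Rel n)" unfolding refl_on_def Rel_def nmult_iff using Z0 by auto
  show "sym (Rel n)" unfolding sym_def Rel_def nmult_iff
  proof (clarify)
    fix x y z assume "x \<in> Z" "y \<in> Z" "z \<in> Z" "x - y = of_nat n * z"
    then show "\<exists>z\<in>Z. y - x = of_nat n * z" using Zneg[of z] by (intro bexI[of _ "-z"]) auto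
  qed
  show "trans (Rel n)" unfolding trans_def Rel_def nmult_iff
  proof (clarify)
    fix x y w z z' assume "x \<in> Z" "y \<in> Z" "w \<in> Z" "z \<in> Z" "z' \<in> Z"
      "x - y = of_nat n * z" "y - w = of_nat n * z'"
    then show "\<exists>z\<in>Z. x - w = of_nat n * z" using Zadd[of z z']
      by (intro bexI[of _ "z + z'"]) (auto simp: algebra_simps)
  qed
qed

lemma card_quot: "n \<ge> 1 \<Longrightarrow> card (Z // Rel n) = n"
proof -
  assume n: "n \<ge> 1"
  have "\<forall>n::nat. n \<ge> 1 \<longrightarrow>
          card (Z // {(x, y). x \<in> Z \<and> y \<in> Z \<and> x - y \<in> nmult Z n}) = n"
    using ZG unfolding Zgroup_def by (elim conjE)
  then show ?thesis using n unfolding Rel_def by simp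
qed

lemma residue: assumes "n \<ge> 1" "z \<in> Z"
  shows "\<exists>s<n. \<exists>t\<in>Z. z = of_nat n * t + of_nat s"
proof -
  define f where "f s = Rel n `` {of_nat s}" for s :: nat
  have fin: "finite (Z // Rel n)" using card_quot[OF assms(1)] assms(1)
    by (intro card_ge_0_finite) simp
  have sub: "f ` {0..<n} \<subseteq> Z // Rel n"
    unfolding f_def using Zofnat by (auto intro: quotientI)
  have inj: "inj_on f {0..<n}"
  proof (rule inj_onI)
    fix a b assume ab: "a \<in> {0..<n}" "b \<in> {0..<n}" "f a = f b"
    then have "(of_nat a, of_nat b) \<in> Rel n"
      unfolding f_def using eq_equiv_class_iff[OF equiv_Rel] Zofnat
      by (metis (no_types, lifting) eq_equiv_class equiv_Rel equiv_class_self)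
    then obtain t where t: "t \<in> Z" "of_nat a - of_nat b = (of_nat n :: 'k) * t"
      unfolding Rel_def nmult_iff by auto
    show "a = b"
    proof (rule ccontr)
      assume "a \<noteq> b"
      then have "t \<noteq> 0" using t by auto
      then have "\<bar>t\<bar> \<ge> 1" using Zpos[OF t(1)] Zpos[OF Zneg[OF t(1)]]
        by (cases "t > 0") (auto simp: abs_if)
      then have "of_nat n \<le> \<bar>(of_nat n :: 'k) * t\<bar>"
        by (simp add: abs_mult mult_le_cancel_left1)
      also have "\<dots> = \<bar>of_nat a - of_nat b\<bar>" using t by simp
      also have "\<dots> < of_nat n"
      proof -
        have "(of_nat a::'k) < of_nat n" "(of_nat b::'k) < of_nat n" using ab by auto
        moreover have "(0::'k) \<le> of_nat a" "(0::'k) \<le> of_nat b" by auto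
        ultimately show ?thesis unfolding abs_less_iff by linarith
      qed
      finally show False by simp
    qed
  qed
  have "card (f ` {0..<n}) = n" using card_image[OF inj] by simp
  then have "f ` {0..<n} = Z // Rel n"
    using card_subset_eq[OF fin sub] card_quot[OF assms(1)] by simp
  moreover have "Rel n `` {z} \<in> Z // Rel n" using assms(2) by (auto intro: quotientI)
  ultimately have "Rel n `` {z} \<in> f ` {0..<n}" by simp
  then obtain s where s0: "s \<in> {0..<n}" "Rel n `` {z} = f s" by blast
  then have s: "s < n" "Rel n `` {z} = Rel n `` {of_nat s}" unfolding f_def by auto
  then have "(z, of_nat s) \<in> Rel n"
    using eq_equiv_class_iff[OF equiv_Rel] assms(2) Zofnat by blast
  then obtain t where t: "t \<in> Z" "z - of_nat s = of_nat n * t"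
    unfolding Rel_def nmult_iff by auto
  then have "z = of_nat n * t + of_nat s" by (simp add: diff_eq_eq)
  then show ?thesis using s(1) t(1) by blast
qed

lemma floorZ: assumes "q \<in> divhull Z" shows "\<exists>t\<in>Z. t \<le> q \<and> q < t + 1"
proof -
  obtain n :: nat where n: "n \<ge> 1" "of_nat n * q \<in> Z" using assms unfolding divhull_def by auto
  obtain s t where st: "s < n" "t \<in> Z" "of_nat n * q = of_nat n * t + of_nat s"
    using residue[OF n] by blast
  have np: "(0::'k) < of_nat n" using n by simp
  have q: "q = t + of_nat s / of_nat n" using st(3) np by (simp add: field_simps)
  have "of_nat s / of_nat n < (1::'k)" using st(1) np by (simp add: divide_less_eq)
  moreover have "(0::'k) \<le> of_nat s / of_nat n" by simp
  ultimately show ?thesis using q st(2) by (intro bexI[of _ t]) auto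
qed

lemma aboveZ: "q \<in> divhull Z \<Longrightarrow> \<exists>t\<in>Z. q < t"
proof -
  assume "q \<in> divhull Z"
  then obtain t where "t \<in> Z" "q < t + 1" using floorZ by blast
  then show ?thesis using Zadd[OF _ Z1, of t] by blast
qed

end


lemma ext_order_simps[simp]:
  "(Fin a < Fin b) \<longleftrightarrow> a < b" "Fin a < PInf" "\<not> PInf < x" "x \<le> PInf"
  "\<not> PInf \<le> Fin b" "(Fin a \<le> Fin b) \<longleftrightarrow> a \<le> b"
  by (cases x; auto simp: less_ext_def)+

context zg begin

lemma omg_Fin[simp]: "Fin q \<in> omg Z \<longleftrightarrow> q \<in> divhull Z" unfolding omg_def by auto
lemma omg_PInf[simp]: "PInf \<in> omg Z" unfolding omg_def by auto
lemma gam_Fin[simp]: "Fin q \<in> gam Z \<longleftrightarrow> q \<in> Z" unfolding gam_def by auto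
lemma gam_PInf[simp]: "PInf \<in> gam Z" unfolding gam_def by auto
lemma gam_omg: "x \<in> gam Z \<Longrightarrow> x \<in> omg Z"
  by (cases x) (auto simp: Zdivhull)
lemma fin_val_omg: "x \<in> omg Z \<Longrightarrow> fin_val x \<in> divhull Z"
  by (cases x) (auto simp: Zdivhull Z0)

definition up :: "'k \<Rightarrow> 'k ext set" where "up c = {y \<in> omg Z. Fin c < y}"
definition ivl :: "'k \<Rightarrow> 'k \<Rightarrow> 'k ext set" where "ivl a b = {y \<in> omg Z. Fin a < y \<and> y < Fin b}"

lemma up_open: "c \<in> divhull Z \<Longrightarrow> basic_open Z (up c)"
  unfolding basic_open_def up_def
  by (intro disjI2 bexI[where x="Fin c"]) auto

lemma PInf_up: "PInf \<in> up c" unfolding up_def by simp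

lemma ivl_open: "a \<in> divhull Z \<Longrightarrow> b \<in> divhull Z \<Longrightarrow> basic_open Z (ivl a b)"
  unfolding basic_open_def ivl_def
  by (intro disjI1 bexI[where x="Fin a"] bexI[where x="Fin b"]) auto

lemma Fin_ivl: "a < q \<Longrightarrow> q < b \<Longrightarrow> q \<in> divhull Z \<Longrightarrow> Fin q \<in> ivl a b"
  unfolding ivl_def by simp

definition dnb :: "'k ext \<Rightarrow> 'k ext set" where "dnb x = up (fin_val x - 1)"

lemma dnb: "x \<in> omg Z \<Longrightarrow> basic_open Z (dnb x) \<and> x \<in> dnb x"
proof -
  assume x: "x \<in> omg Z"
  have "fin_val x - 1 \<in> divhull Z"
    using dh_diff[OF fin_val_omg[OF x] Zdivhull[OF Z1]] .
  then have "basic_open Z (dnb x)" unfolding dnb_def by (rule up_open)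
  moreover have "x \<in> dnb x" using x unfolding dnb_def up_def by (cases x) auto
  ultimately show ?thesis by simp
qed

lemma basic_open_sub: "basic_open Z S \<Longrightarrow> S \<subseteq> omg Z"
  unfolding basic_open_def by auto

lemma basic_open_PInf: assumes "basic_open Z S" "PInf \<in> S" shows "\<exists>c\<in>divhull Z. up c \<subseteq> S"
  using assms unfolding basic_open_def
proof (elim disjE bexE)
  fix a b assume "S = {y \<in> omg Z. a < y \<and> y < b}" "PInf \<in> S"
  then show ?thesis by simp
next
  fix a assume a: "a \<in> omg Z" "S = {y \<in> omg Z. a < y}" "PInf \<in> S"
  then obtain c where c: "a = Fin c" by (cases a) auto
  then have "c \<in> divhull Z" using a by simp
  then show ?thesis using a c unfolding up_def by auto
qed

lemma omg_max: "a \<in> omg Z \<Longrightarrow> b \<in> omg Z \<Longrightarrow> max a b \<in> omg Z" by (simp add: max_def)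
lemma omg_min: "a \<in> omg Z \<Longrightarrow> b \<in> omg Z \<Longrightarrow> min a b \<in> omg Z" by (simp add: min_def)

lemma bo_i: "a \<in> omg Z \<Longrightarrow> b \<in> omg Z \<Longrightarrow> basic_open Z {y \<in> omg Z. a < y \<and> y < b}"
  unfolding basic_open_def by (rule disjI1, rule bexI[where x=a], rule bexI[where x=b]) auto
lemma bo_u: "a \<in> omg Z \<Longrightarrow> basic_open Z {y \<in> omg Z. a < y}"
  unfolding basic_open_def by (rule disjI2, rule bexI[where x=a]) auto

lemma basic_open_Int: assumes "basic_open Z S" "basic_open Z T" shows "basic_open Z (S \<inter> T)"
proof -
  from assms(1) consider (i1) a b where "a \<in> omg Z" "b \<in> omg Z" "S = {y \<in> omg Z. a < y \<and> y < b}"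
    | (u1) a where "a \<in> omg Z" "S = {y \<in> omg Z. a < y}"
    unfolding basic_open_def by blast
  then show ?thesis
  proof cases
    case i1
    from assms(2) consider (i2) a' b' where "a' \<in> omg Z" "b' \<in> omg Z" "T = {y \<in> omg Z. a' < y \<and> y < b'}"
      | (u2) a' where "a' \<in> omg Z" "T = {y \<in> omg Z. a' < y}"
      unfolding basic_open_def by blast
    then show ?thesis
    proof cases
      case i2
      have "S \<inter> T = {y \<in> omg Z. max a a' < y \<and> y < min b b'}" using i1 i2 by auto
      then show ?thesis using bo_i[OF omg_max[OF i1(1) i2(1)] omg_min[OF i1(2) i2(2)]] by simp
    next
      case u2
      have "S \<inter> T = {y \<in> omg Z. max a a' < y \<and> y < b}" using i1 u2 by auto
      then show ?thesis using bo_i[OF omg_max[OF i1(1) u2(1)] i1(2)] by simp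
    qed
  next
    case u1
    from assms(2) consider (i2) a' b' where "a' \<in> omg Z" "b' \<in> omg Z" "T = {y \<in> omg Z. a' < y \<and> y < b'}"
      | (u2) a' where "a' \<in> omg Z" "T = {y \<in> omg Z. a' < y}"
      unfolding basic_open_def by blast
    then show ?thesis
    proof cases
      case i2
      have "S \<inter> T = {y \<in> omg Z. max a a' < y \<and> y < b'}" using u1 i2 by auto
      then show ?thesis using bo_i[OF omg_max[OF u1(1) i2(1)] i2(2)] by simp
    next
      case u2
      have "S \<inter> T = {y \<in> omg Z. max a a' < y}" using u1 u2 by auto
      then show ?thesis using bo_u[OF omg_max[OF u1(1) u2(1)]] by simp
    qed
  qed
qed

lemma closD: "x \<in> clos Z m A \<Longrightarrow> length x = m \<and> set x \<subseteq> omg Z"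
  unfolding clos_def by auto

lemma closD_nth: "x \<in> clos Z m A \<Longrightarrow> i < m \<Longrightarrow> x ! i \<in> omg Z"
  using closD[of x m A] nth_mem[of i x] by auto

lemma clos_approx:
  assumes "x \<in> clos Z m A" "\<And>i. i < m \<Longrightarrow> basic_open Z (S i) \<and> x ! i \<in> S i"
  shows "\<exists>a\<in>A. \<forall>i<m. a ! i \<in> S i"
proof -
  have len: "length x = m" using closD[OF assms(1)] by simp
  have "basic_nbhd Z m x (map S [0..<m])"
    unfolding basic_nbhd_def using assms(2) by simp
  then obtain a where "a \<in> A" "\<forall>i<m. a ! i \<in> map S [0..<m] ! i"
    using assms(1) unfolding clos_def by blast
  then show ?thesis by auto
qed

lemma closI: "length x = m \<Longrightarrow> set x \<subseteq> omg Z \<Longrightarrow>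
   (\<And>Ss. basic_nbhd Z m x Ss \<Longrightarrow> \<exists>a\<in>A. \<forall>i<m. a ! i \<in> Ss ! i) \<Longrightarrow> x \<in> clos Z m A"
  unfolding clos_def by blast

lemma clos_mono: "A \<subseteq> B \<Longrightarrow> clos Z m A \<subseteq> clos Z m B"
  unfolding clos_def by blast

lemma clos_ext: assumes "\<And>a. a \<in> A \<Longrightarrow> length a = m \<and> set a \<subseteq> omg Z" shows "A \<subseteq> clos Z m A"
proof
  fix x assume x: "x \<in> A"
  show "x \<in> clos Z m A"
  proof (rule closI)
    show "length x = m" "set x \<subseteq> omg Z" using assms[OF x] by auto
    fix Ss assume "basic_nbhd Z m x Ss"
    then show "\<exists>a\<in>A. \<forall>i<m. a ! i \<in> Ss ! i" using x unfolding basic_nbhd_def by blast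
  qed
qed

lemma clos_idem: "clos Z m (clos Z m A) = clos Z m A"
proof
  show "clos Z m (clos Z m A) \<subseteq> clos Z m A"
  proof
    fix x assume x: "x \<in> clos Z m (clos Z m A)"
    show "x \<in> clos Z m A"
    proof (rule closI)
      show "length x = m" "set x \<subseteq> omg Z" using closD[OF x] by auto
      fix Ss assume Ss: "basic_nbhd Z m x Ss"
      then obtain c where c: "c \<in> clos Z m A" "\<forall>i<m. c ! i \<in> Ss ! i"
        using x unfolding clos_def by blast
      have "basic_nbhd Z m c Ss" using Ss c(2) unfolding basic_nbhd_def by auto
      then show "\<exists>a\<in>A. \<forall>i<m. a ! i \<in> Ss ! i" using c(1) unfolding clos_def by blast
    qed
  qed
  show "clos Z m A \<subseteq> clos Z m (clos Z m A)"
  proof (rule clos_ext)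
    fix a assume "a \<in> clos Z m A"
    then show "length a = m \<and> set a \<subseteq> omg Z" by (rule closD)
  qed
qed

lemma clos_empty: "clos Z m {} = {}"
proof (rule ccontr)
  assume "clos Z m {} \<noteq> {}"
  then obtain x where x: "x \<in> clos Z m {}" by blast
  have "\<exists>a\<in>{}. \<forall>i<m. a ! i \<in> dnb (x ! i)"
  proof (rule clos_approx[OF x])
    fix i assume "i < m"
    then show "basic_open Z (dnb (x ! i)) \<and> x ! i \<in> dnb (x ! i)"
      by (intro dnb closD_nth[OF x])
  qed
  then show False by simp
qed

lemma clos_take:
  assumes x: "x \<in> clos Z m A" and k: "k \<le> m"
  shows "take k x \<in> clos Z k (take k ` A)"
proof (rule closI)
  show "length (take k x) = k" using closD[OF x] k by simp
  show "set (take k x) \<subseteq> omg Z" using set_take_subset[of k x] closD[OF x] by auto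
  fix Ss assume Ss: "basic_nbhd Z k (take k x) Ss"
  define S where "S i = (if i < k then Ss ! i else dnb (x ! i))" for i
  have "\<exists>a\<in>A. \<forall>i<m. a ! i \<in> S i"
  proof (rule clos_approx[OF x])
    fix i assume i: "i < m"
    show "basic_open Z (S i) \<and> x ! i \<in> S i"
    proof (cases "i < k")
      case True
      have "basic_open Z (Ss ! i)" "take k x ! i \<in> Ss ! i"
        using Ss True unfolding basic_nbhd_def by auto
      then show ?thesis using True by (simp add: S_def)
    next
      case False
      then show ?thesis using dnb[OF closD_nth[OF x i]] unfolding S_def by simp
    qed
  qed
  then obtain a where a: "a \<in> A" "\<forall>i<m. a ! i \<in> S i" by blast
  have "\<forall>i<k. take k a ! i \<in> Ss ! i"
  proof (intro allI impI)
    fix i assume i: "i < k"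
    then have "a ! i \<in> S i" using a(2) k by auto
    then show "take k a ! i \<in> Ss ! i" using i by (simp add: S_def)
  qed
  then show "\<exists>a\<in>take k ` A. \<forall>i<k. a ! i \<in> Ss ! i" using a(1) by blast
qed

lemma gam_ivl_eq: assumes "v \<in> Z" "y \<in> gam Z" "y \<in> ivl (v - 1) (v + 1)" shows "y = Fin v"
proof -
  obtain z where z: "y = Fin z" using assms(3) unfolding ivl_def by (cases y) auto
  have zZ: "z \<in> Z" using assms(2) z by simp
  have "v - 1 < z" "z < v + 1" using assms(3) z unfolding ivl_def by auto
  then have "\<bar>z - v\<bar> < 1" by (simp add: abs_less_iff)
  then have "z - v = 0" using Zsmall Zdiff[OF zZ assms(1)] by blast
  then show ?thesis using z by simp
qed

definition GL :: "nat \<Rightarrow> 'k ext list set" where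
  "GL m = {a. length a = m \<and> set a \<subseteq> gam Z}"

lemma GL_omg: "a \<in> GL m \<Longrightarrow> length a = m \<and> set a \<subseteq> omg Z"
  unfolding GL_def using gam_omg by auto

lemma clos_ext_GL: "A \<subseteq> GL m \<Longrightarrow> A \<subseteq> clos Z m A"
proof -
  assume A: "A \<subseteq> GL m"
  show ?thesis
  proof (rule clos_ext)
    fix a assume "a \<in> A"
    then have "a \<in> GL m" using A by blast
    then show "length a = m \<and> set a \<subseteq> omg Z" by (rule GL_omg)
  qed
qed

lemma clos_gam:
  assumes A: "A \<subseteq> GL m" and x: "x \<in> clos Z m A" and i: "i < m"
  shows "x ! i \<in> gam Z"
proof (cases "x ! i")
  case PInf
  then show ?thesis by simp
next
  case (Fin q)
  then have q: "q \<in> divhull Z" using closD_nth[OF x i] by simp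
  then obtain n :: nat where n: "n \<ge> 1" "of_nat n * q \<in> Z" unfolding divhull_def by auto
  define e :: 'k where "e = 1 / of_nat (2 * n)"
  have e: "e \<in> divhull Z" unfolding e_def by (rule dh_inv) (use n in simp)
  have epos: "0 < e" unfolding e_def using n by simp
  define S where "S j = (if j = i then ivl (q - e) (q + e) else dnb (x ! j))" for j
  have "\<exists>a\<in>A. \<forall>j<m. a ! j \<in> S j"
  proof (rule clos_approx[OF x])
    fix j assume j: "j < m"
    show "basic_open Z (S j) \<and> x ! j \<in> S j"
    proof (cases "j = i")
      case True
      have "basic_open Z (ivl (q - e) (q + e))" by (rule ivl_open[OF dh_diff[OF q e] dh_add[OF q e]])
      moreover have "Fin q \<in> ivl (q - e) (q + e)" using epos q by (intro Fin_ivl) auto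
      ultimately show ?thesis using True Fin unfolding S_def by simp
    next
      case False
      then show ?thesis using dnb[OF closD_nth[OF x j]] unfolding S_def by simp
    qed
  qed
  then obtain a where a1: "a \<in> A" and a2: "\<forall>j<m. a ! j \<in> S j" by blast
  have "a ! i \<in> S i" using a2 i by blast
  then have ai: "a ! i \<in> ivl (q - e) (q + e)" by (simp add: S_def)
  have la: "a \<in> GL m" using A a1 by blast
  have "a ! i \<in> gam Z" using nth_mem[of i a] i la unfolding GL_def by auto
  then obtain z where z: "a ! i = Fin z" "z \<in> Z" using ai unfolding ivl_def by (cases "a ! i") auto
  have "q - e < z" "z < q + e" using ai z(1) unfolding ivl_def by auto
  then have lt1: "\<bar>z - q\<bar> < e" by (simp add: abs_less_iff)
  have npos: "(0::'k) < of_nat n" using n by simp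
  have eq: "of_nat n * z - of_nat n * q = of_nat n * (z - q)" by (simp add: right_diff_distrib)
  have "\<bar>of_nat n * z - of_nat n * q\<bar> = of_nat n * \<bar>z - q\<bar>" unfolding eq by (simp add: abs_mult)
  also have "\<dots> < of_nat n * e" using mult_strict_left_mono[OF lt1 npos] .
  also have "of_nat n * e = 1 / 2" unfolding e_def using n by simp
  finally have lt: "\<bar>of_nat n * z - of_nat n * q\<bar> < 1" by simp
  have "of_nat n * z - of_nat n * q \<in> Z" using Zdiff[OF Znat[OF z(2)] n(2)] .
  then have "of_nat n * z - of_nat n * q = 0" using Zsmall lt by blast
  then have "z = q" using npos unfolding eq by simp
  then show ?thesis using Fin z(2) by simp
qed

lemma clos_GL: assumes A: "A \<subseteq> GL m" and x: "x \<in> clos Z m A" shows "x \<in> GL m"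
proof -
  have len: "length x = m" using closD[OF x] by simp
  have "set x \<subseteq> gam Z"
  proof
    fix y assume "y \<in> set x"
    then obtain i where "i < length x" "x ! i = y" by (auto simp: in_set_conv_nth)
    then show "y \<in> gam Z" using clos_gam[OF A x] len by blast
  qed
  then show ?thesis using len unfolding GL_def by simp
qed

end


context zg begin

definition lvl :: "nat \<Rightarrow> nat \<Rightarrow> nat set \<Rightarrow> 'k ext list set \<Rightarrow> 'k ext list set \<Rightarrow> bool" where
 "lvl n k I' Dk Dk1 \<longleftrightarrow> (\<exists>\<mu> \<nu> (\<rho>::nat).
          affine_on Z {i \<in> I'. i < k} Dk \<mu> \<and>
          affine_on Z {i \<in> I'. i < k} Dk \<nu> \<and>
          largely_cont Z k Dk \<mu> \<and>
          largely_cont Z k Dk \<nu> \<and>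
          (\<forall>y\<in>Dk. Fin 0 \<le> \<mu> y \<and> Fin 0 \<le> \<nu> y) \<and>
          \<rho> < n \<and>
          Dk1 = {a \<in> Fgam Z (Suc k) I'. butlast a \<in> Dk \<and>
                 \<mu> (butlast a) \<le> a ! k \<and> a ! k \<le> \<nu> (butlast a) \<and>
                 cong_ext Z n (a ! k) (Fin (of_nat \<rho>))})"

lemma lcp_Cons: "lcp_rev Z (n # Ns) A = (\<exists>I'. I' \<subseteq> {0..<Suc (length Ns)} \<and>
   A \<subseteq> Fgam Z (Suc (length Ns)) I' \<and> lcp_rev Z Ns (butlast ` A) \<and>
   lvl n (length Ns) I' (butlast ` A) A)"
  unfolding lcp_rev.simps lvl_def by (rule refl)

definition Qd :: "nat list \<Rightarrow> 'k ext list set \<Rightarrow> nat \<Rightarrow> bool" where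
  "Qd N E k \<longleftrightarrow> (\<exists>I'. I' \<subseteq> {0..<Suc k} \<and> take (Suc k) ` E \<subseteq> Fgam Z (Suc k) I' \<and>
      lvl (N ! k) k I' (take k ` E) (take (Suc k) ` E))"

definition LV :: "nat list \<Rightarrow> 'k ext list set \<Rightarrow> bool" where
  "LV N E \<longleftrightarrow> E \<noteq> {} \<and> (\<forall>k<length N. Qd N E k)"

lemma img_id_on: "(\<And>a. a \<in> E \<Longrightarrow> f a = a) \<Longrightarrow> f ` E = E"
  by (metis image_cong image_ident)

lemma all_less_Suc': "(\<forall>k<Suc L. P k) = ((\<forall>k<L. P k) \<and> P L)"
  by (auto simp: less_Suc_eq)

lemma lc_LV: "\<forall>a\<in>E. length a = length N \<Longrightarrow> lc_precell Z N E = LV N E"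
proof (induction N arbitrary: E rule: rev_induct)
  case Nil
  have "E \<subseteq> {[]}" using Nil by auto
  then show ?case unfolding lc_precell_def LV_def by auto
next
  case (snoc x xs)
  define L where "L = length xs"
  have lenE: "\<And>a. a \<in> E \<Longrightarrow> length a = Suc L" using snoc.prems unfolding L_def by simp
  have lenB: "\<forall>a\<in>butlast ` E. length a = length xs" using lenE unfolding L_def by auto
  have IH: "lc_precell Z xs (butlast ` E) = LV xs (butlast ` E)" using snoc.IH[OF lenB] .
  have tE: "take (Suc L) ` E = E" by (rule img_id_on) (simp add: lenE)
  have tL: "take L ` E = butlast ` E"
  proof (rule image_cong[OF refl])
    fix a assume "a \<in> E"
    then show "take L a = butlast a" using lenE by (simp add: butlast_conv_take)
  qed
  have tk: "take k ` butlast ` E = take k ` E" if k: "k \<le> L" for k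
    unfolding image_image
  proof (rule image_cong[OF refl])
    fix a assume "a \<in> E"
    then show "take k (butlast a) = take k a" using lenE k by (simp add: take_butlast)
  qed
  have nth1: "(xs @ [x]) ! k = xs ! k" if "k < L" for k using that unfolding L_def by (simp add: nth_append)
  have nth2: "(xs @ [x]) ! L = x" unfolding L_def by simp
  have Qk: "Qd xs (butlast ` E) k = Qd (xs @ [x]) E k" if k: "k < L" for k
  proof -
    have "take (Suc k) ` butlast ` E = take (Suc k) ` E" using tk k by simp
    moreover have "take k ` butlast ` E = take k ` E" using tk k by simp
    ultimately show ?thesis unfolding Qd_def using nth1[OF k] by simp
  qed
  have QL: "Qd (xs @ [x]) E L = (\<exists>I'. I' \<subseteq> {0..<Suc L} \<and> E \<subseteq> Fgam Z (Suc L) I' \<and>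
      lvl x L I' (butlast ` E) E)"
    unfolding Qd_def tE tL nth2 by (rule refl)
  have lc: "lc_precell Z (xs @ [x]) E = ((\<exists>I'. I' \<subseteq> {0..<Suc L} \<and> E \<subseteq> Fgam Z (Suc L) I' \<and>
      lvl x L I' (butlast ` E) E) \<and> lc_precell Z xs (butlast ` E))"
  proof -
    have r: "rev (xs @ [x]) = x # rev xs" by simp
    show ?thesis unfolding lc_precell_def r lcp_Cons length_rev L_def by blast
  qed
  have LVs0: "LV xs (butlast ` E) = (butlast ` E \<noteq> {} \<and> (\<forall>k<L. Qd xs (butlast ` E) k))"
    unfolding LV_def L_def by (rule refl)
  have LVs1: "(\<forall>k<L. Qd xs (butlast ` E) k) = (\<forall>k<L. Qd (xs @ [x]) E k)"
    using Qk by blast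
  have LVs: "LV xs (butlast ` E) = (E \<noteq> {} \<and> (\<forall>k<L. Qd (xs @ [x]) E k))"
    unfolding LVs0 LVs1 by simp
  have LVb0: "LV (xs @ [x]) E = (E \<noteq> {} \<and> (\<forall>k<Suc L. Qd (xs @ [x]) E k))"
    unfolding LV_def L_def by simp
  have LVb: "LV (xs @ [x]) E = (E \<noteq> {} \<and> (\<forall>k<L. Qd (xs @ [x]) E k) \<and> Qd (xs @ [x]) E L)"
    unfolding LVb0 all_less_Suc' by (rule refl)
  show ?case unfolding lc IH LVs LVb QL by blast
qed

lemma Fgam_unique: "a \<in> Fgam Z m K1 \<Longrightarrow> a \<in> Fgam Z m K2 \<Longrightarrow> K1 = K2"
  unfolding Fgam_def by auto

lemma Fgam_GL: "Fgam Z m K \<subseteq> GL m" unfolding Fgam_def GL_def by auto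

lemma take_Fgam: assumes a: "a \<in> Fgam Z m I" and k: "k \<le> m"
  shows "take k a \<in> Fgam Z k {i \<in> I. i < k}"
proof -
  have la: "length a = m" and sa: "set a \<subseteq> gam Z" and Ia: "{i. i < m \<and> a ! i \<noteq> PInf} = I"
    using a unfolding Fgam_def by auto
  have "set (take k a) \<subseteq> gam Z" using set_take_subset[of k a] sa by auto
  moreover have "{i. i < k \<and> take k a ! i \<noteq> PInf} = {i \<in> I. i < k}"
  proof -
    have "{i. i < k \<and> take k a ! i \<noteq> PInf} = {i. i < k \<and> a ! i \<noteq> PInf}" by auto
    also have "\<dots> = {i \<in> I. i < k}" using Ia k by auto
    finally show ?thesis .
  qed
  ultimately show ?thesis unfolding Fgam_def using la k by simp
qed

lemma Fgam_nth_I: "a \<in> Fgam Z m I \<Longrightarrow> i < m \<Longrightarrow> i \<in> I \<Longrightarrow> \<exists>z\<in>Z. a ! i = Fin z"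
proof -
  assume a: "a \<in> Fgam Z m I" and i: "i < m" "i \<in> I"
  have "a ! i \<noteq> PInf" using a i unfolding Fgam_def by auto
  moreover have "a ! i \<in> gam Z" using a i nth_mem[of i a] unfolding Fgam_def by auto
  ultimately show ?thesis by (cases "a ! i") auto
qed

lemma Fgam_nth_notI: "a \<in> Fgam Z m I \<Longrightarrow> i < m \<Longrightarrow> i \<notin> I \<Longrightarrow> a ! i = PInf"
  unfolding Fgam_def by auto

lemma affine_on_mono: "Y' \<subseteq> Y \<Longrightarrow> affine_on Z K Y g \<Longrightarrow> affine_on Z K Y' g"
  unfolding affine_on_def by blast

lemma largely_cont_mono: assumes "Y' \<subseteq> Y" "largely_cont Z k Y g" shows "largely_cont Z k Y' g"
proof -
  obtain G where G1: "\<forall>y\<in>Y. G y = g y" and G2: "\<forall>x\<in>clos Z k Y. G x \<in> omg Z"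
    and G3: "\<forall>x\<in>clos Z k Y. \<forall>S. basic_open Z S \<and> G x \<in> S \<longrightarrow>
           (\<exists>Ss. basic_nbhd Z k x Ss \<and> (\<forall>y\<in>clos Z k Y. (\<forall>i<k. y ! i \<in> Ss ! i) \<longrightarrow> G y \<in> S))"
    using assms(2) unfolding largely_cont_def by blast
  have sub: "clos Z k Y' \<subseteq> clos Z k Y" using clos_mono[OF assms(1)] .
  show ?thesis unfolding largely_cont_def
  proof (intro exI[of _ G] conjI ballI allI impI)
    fix y assume "y \<in> Y'" then show "G y = g y" using G1 assms(1) by blast
  next
    fix x assume "x \<in> clos Z k Y'" then show "G x \<in> omg Z" using G2 sub by blast
  next
    fix x S assume x: "x \<in> clos Z k Y'" and S: "basic_open Z S \<and> G x \<in> S"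
    then obtain Ss where Ss: "basic_nbhd Z k x Ss"
        "\<forall>y\<in>clos Z k Y. (\<forall>i<k. y ! i \<in> Ss ! i) \<longrightarrow> G y \<in> S"
      using G3 sub by blast
    then show "\<exists>Ss. basic_nbhd Z k x Ss \<and> (\<forall>y\<in>clos Z k Y'. (\<forall>i<k. y ! i \<in> Ss ! i) \<longrightarrow> G y \<in> S)"
      using sub by blast
  qed
qed

lemma lvl_restrict:
  assumes "lvl n k I' Dk Dk1" "Dk' \<subseteq> Dk"
  shows "lvl n k I' Dk' {a \<in> Dk1. butlast a \<in> Dk'}"
proof -
  obtain \<mu> \<nu> \<rho> where h1: "affine_on Z {i \<in> I'. i < k} Dk \<mu>" and h2: "affine_on Z {i \<in> I'. i < k} Dk \<nu>"
    and h3: "largely_cont Z k Dk \<mu>" and h4: "largely_cont Z k Dk \<nu>"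
    and h5: "\<forall>y\<in>Dk. Fin 0 \<le> \<mu> y \<and> Fin 0 \<le> \<nu> y" and h6: "\<rho> < n"
    and h7: "Dk1 = {a \<in> Fgam Z (Suc k) I'. butlast a \<in> Dk \<and>
                 \<mu> (butlast a) \<le> a ! k \<and> a ! k \<le> \<nu> (butlast a) \<and>
                 cong_ext Z n (a ! k) (Fin (of_nat \<rho>))}"
    using assms(1) unfolding lvl_def by blast
  have e: "{a \<in> Dk1. butlast a \<in> Dk'} = {a \<in> Fgam Z (Suc k) I'. butlast a \<in> Dk' \<and>
                 \<mu> (butlast a) \<le> a ! k \<and> a ! k \<le> \<nu> (butlast a) \<and>
                 cong_ext Z n (a ! k) (Fin (of_nat \<rho>))}"
    unfolding h7 using assms(2) by blast
  show ?thesis unfolding lvl_def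
    apply (rule exI[of _ \<mu>], rule exI[of _ \<nu>], rule exI[of _ \<rho>])
    using affine_on_mono[OF assms(2) h1] affine_on_mono[OF assms(2) h2]
      largely_cont_mono[OF assms(2) h3] largely_cont_mono[OF assms(2) h4] h5 h6 e assms(2)
    by blast
qed

end


lemma rat_denom: "\<exists>d::nat. d \<ge> 1 \<and> of_nat d * (r::rat) \<in> \<int>"
proof -
  obtain p q where pq: "quotient_of r = (p, q)" by (cases "quotient_of r") auto
  have q: "q > 0" using quotient_of_denom_pos[OF pq] .
  have r: "r = of_int p / of_int q" using quotient_of_div[OF pq] .
  have "of_nat (nat q) * r = of_int p" using q r by simp
  then show ?thesis using q by (intro exI[of _ "nat q"]) auto
qed

lemma rat_denoms: "finite K \<Longrightarrow> \<exists>d::nat. d \<ge> 1 \<and> (\<forall>i\<in>K. of_nat d * (\<alpha> i::rat) \<in> \<int>)"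
proof (induction K rule: finite_induct)
  case empty
  then show ?case by (intro exI[of _ 1]) simp
next
  case (insert x F)
  then obtain d where d: "d \<ge> 1" "\<forall>i\<in>F. of_nat d * \<alpha> i \<in> \<int>" by blast
  obtain e where e: "e \<ge> 1" "of_nat e * \<alpha> x \<in> \<int>" using rat_denom by blast
  have "\<forall>i\<in>insert x F. of_nat (d * e) * \<alpha> i \<in> \<int>"
  proof
    fix i assume "i \<in> insert x F"
    then consider "i = x" | "i \<in> F" by blast
    then show "of_nat (d * e) * \<alpha> i \<in> \<int>"
    proof cases
      case 1
      have "of_nat (d * e) * \<alpha> i = of_nat d * (of_nat e * \<alpha> x)" using 1 by (simp only: of_nat_mult mult.assoc)
      then show ?thesis using e(2) by (metis Ints_mult Ints_of_nat)
    next
      case 2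
      have "of_nat (d * e) * \<alpha> i = of_nat e * (of_nat d * \<alpha> i)" by (simp only: of_nat_mult mult.assoc mult.commute mult.left_commute)
      then show ?thesis using d(2) 2 by (metis Ints_mult Ints_of_nat)
    qed
  qed
  moreover have "d * e \<ge> 1" using d e by (simp add: Suc_le_eq)
  ultimately show ?case by blast
qed

context zg begin

lemma affine_disc:
  assumes aff: "affine_on Z K Y f" and fin: "finite K"
    and Yf: "\<forall>y\<in>Y. \<forall>i\<in>K. fin_val (y ! i) \<in> Z"
  shows "(\<forall>y\<in>Y. f y = PInf) \<or>
    (\<exists>d::nat. d \<ge> 1 \<and> (\<forall>y\<in>Y. \<exists>u. f y = Fin u) \<and>
       (\<forall>y\<in>Y. \<forall>y'\<in>Y. of_nat d * (fin_val (f y) - fin_val (f y')) \<in> Z))"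
proof (cases "\<forall>y\<in>Y. f y = PInf")
  case True
  then show ?thesis by simp
next
  case False
  then obtain \<alpha>0 \<alpha> where fy: "\<forall>y\<in>Y. f y = Fin (\<alpha>0 + (\<Sum>i\<in>K. of_rat (\<alpha> i) * fin_val (y ! i)))"
    using aff unfolding affine_on_def by blast
  obtain d where d: "d \<ge> 1" "\<forall>i\<in>K. of_nat d * (\<alpha> i) \<in> \<int>" using rat_denoms[OF fin] by blast
  have "\<forall>y\<in>Y. \<forall>y'\<in>Y. of_nat d * (fin_val (f y) - fin_val (f y')) \<in> Z"
  proof (intro ballI)
    fix y y' assume y: "y \<in> Y" and y': "y' \<in> Y"
    have "of_nat d * (fin_val (f y) - fin_val (f y')) =
       (\<Sum>i\<in>K. of_rat (of_nat d * \<alpha> i) * (fin_val (y ! i) - fin_val (y' ! i)))"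
      using fy y y' by (simp add: sum_subtractf[symmetric] sum_distrib_left of_rat_mult algebra_simps)
    also have "\<dots> \<in> Z"
    proof (rule Zsum[OF fin])
      fix i assume i: "i \<in> K"
      obtain c where c: "of_nat d * \<alpha> i = of_int c" using d(2) i Ints_cases by metis
      have "fin_val (y ! i) - fin_val (y' ! i) \<in> Z" using Yf y y' i Zdiff by blast
      then show "of_rat (of_nat d * \<alpha> i) * (fin_val (y ! i) - fin_val (y' ! i)) \<in> Z"
        unfolding c of_rat_of_int_eq by (rule Zint)
    qed
    finally show "of_nat d * (fin_val (f y) - fin_val (f y')) \<in> Z" .
  qed
  moreover have "\<forall>y\<in>Y. \<exists>u. f y = Fin u" using fy by blast
  ultimately show ?thesis using d(1) by blast
qed

definition nbh :: "nat \<Rightarrow> 'k ext list \<Rightarrow> (nat \<Rightarrow> 'k ext set) \<Rightarrow> bool" where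
  "nbh k x W \<longleftrightarrow> (\<forall>i<k. basic_open Z (W i) \<and> x ! i \<in> W i)"

definition inW :: "nat \<Rightarrow> (nat \<Rightarrow> 'k ext set) \<Rightarrow> 'k ext list \<Rightarrow> bool" where
  "inW k W y \<longleftrightarrow> (\<forall>i<k. y ! i \<in> W i)"

lemma nbh_Int: "nbh k x W1 \<Longrightarrow> nbh k x W2 \<Longrightarrow> nbh k x (\<lambda>i. W1 i \<inter> W2 i)"
  unfolding nbh_def using basic_open_Int by blast

lemma inW_Int: "inW k (\<lambda>i. W1 i \<inter> W2 i) y \<longleftrightarrow> inW k W1 y \<and> inW k W2 y"
  unfolding inW_def by blast

lemma lc_limit:
  assumes lc: "largely_cont Z k Y f" and Y: "Y \<subseteq> GL k" and x: "x \<in> clos Z k Y"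
  shows "\<exists>g\<in>omg Z. \<forall>T. basic_open Z T \<longrightarrow> g \<in> T \<longrightarrow>
           (\<exists>W. nbh k x W \<and> (\<forall>y\<in>Y. inW k W y \<longrightarrow> f y \<in> T))"
proof -
  obtain G where G1: "\<forall>y\<in>Y. G y = f y" and G2: "\<forall>x\<in>clos Z k Y. G x \<in> omg Z"
    and G3: "\<forall>x\<in>clos Z k Y. \<forall>S. basic_open Z S \<and> G x \<in> S \<longrightarrow>
           (\<exists>Ss. basic_nbhd Z k x Ss \<and> (\<forall>y\<in>clos Z k Y. (\<forall>i<k. y ! i \<in> Ss ! i) \<longrightarrow> G y \<in> S))"
    using lc unfolding largely_cont_def by blast
  have sub: "Y \<subseteq> clos Z k Y" using clos_ext_GL[OF Y] .
  show ?thesis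
  proof (intro bexI[of _ "G x"] allI impI)
    show "G x \<in> omg Z" using G2 x by blast
    fix T assume T: "basic_open Z T" "G x \<in> T"
    then obtain Ss where Ss: "basic_nbhd Z k x Ss"
        "\<forall>y\<in>clos Z k Y. (\<forall>i<k. y ! i \<in> Ss ! i) \<longrightarrow> G y \<in> T"
      using G3 x by blast
    have "nbh k x (\<lambda>i. Ss ! i)" using Ss(1) unfolding nbh_def basic_nbhd_def by blast
    moreover have "\<forall>y\<in>Y. inW k (\<lambda>i. Ss ! i) y \<longrightarrow> f y \<in> T"
    proof (intro ballI impI)
      fix y assume y: "y \<in> Y" "inW k (\<lambda>i. Ss ! i) y"
      have "G y \<in> T" using Ss(2) sub y unfolding inW_def by blast
      then show "f y \<in> T" using G1 y(1) by simp
    qed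
    ultimately show "\<exists>W. nbh k x W \<and> (\<forall>y\<in>Y. inW k W y \<longrightarrow> f y \<in> T)" by blast
  qed
qed

lemma lim_stable:
  assumes aff: "affine_on Z K Y f" and fin: "finite K"
    and Yf: "\<forall>y\<in>Y. \<forall>i\<in>K. fin_val (y ! i) \<in> Z"
    and lc: "largely_cont Z k Y f" and Y: "Y \<subseteq> GL k" and x: "x \<in> clos Z k Y"
    and c: "c \<in> divhull Z"
  shows "\<exists>W. nbh k x W \<and> (\<forall>y\<in>Y. \<forall>y'\<in>Y. inW k W y \<longrightarrow> inW k W y' \<longrightarrow>
             (f y = f y' \<or> (Fin c < f y \<and> Fin c < f y')))"
proof -
  obtain g where g: "g \<in> omg Z" and gT: "\<And>T. basic_open Z T \<Longrightarrow> g \<in> T \<Longrightarrow>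
           (\<exists>W. nbh k x W \<and> (\<forall>y\<in>Y. inW k W y \<longrightarrow> f y \<in> T))"
    using lc_limit[OF lc Y x] by blast
  show ?thesis
  proof (cases g)
    case PInf
    obtain W where W: "nbh k x W" "\<forall>y\<in>Y. inW k W y \<longrightarrow> f y \<in> up c"
      using gT[OF up_open[OF c]] PInf PInf_up by blast
    show ?thesis
      by (rule exI[of _ W]) (use W in \<open>auto simp: up_def\<close>)
  next
    case (Fin \<gamma>)
    have \<gamma>: "\<gamma> \<in> divhull Z" using g Fin by simp
    from affine_disc[OF aff fin Yf] show ?thesis
    proof (elim disjE exE conjE)
      assume "\<forall>y\<in>Y. f y = PInf"
      then show ?thesis
        by (intro exI[of _ "\<lambda>i. dnb (x ! i)"] conjI) (auto simp: nbh_def dnb closD_nth[OF x])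
    next
      fix d :: nat assume d: "d \<ge> 1" and fu: "\<forall>y\<in>Y. \<exists>u. f y = Fin u"
        and fd: "\<forall>y\<in>Y. \<forall>y'\<in>Y. of_nat d * (fin_val (f y) - fin_val (f y')) \<in> Z"
      define e :: 'k where "e = 1 / of_nat (2 * d)"
      have e: "e \<in> divhull Z" unfolding e_def by (rule dh_inv) (use d in simp)
      have epos: "0 < e" unfolding e_def using d by simp
      have T: "basic_open Z (ivl (\<gamma> - e) (\<gamma> + e))"
        by (rule ivl_open[OF dh_diff[OF \<gamma> e] dh_add[OF \<gamma> e]])
      have gT': "g \<in> ivl (\<gamma> - e) (\<gamma> + e)" unfolding Fin using epos \<gamma> by (intro Fin_ivl) auto
      obtain W where W: "nbh k x W" "\<forall>y\<in>Y. inW k W y \<longrightarrow> f y \<in> ivl (\<gamma> - e) (\<gamma> + e)"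
        using gT[OF T gT'] by blast
      have "\<forall>y\<in>Y. \<forall>y'\<in>Y. inW k W y \<longrightarrow> inW k W y' \<longrightarrow> f y = f y'"
      proof (intro ballI impI)
        fix y y' assume y: "y \<in> Y" and y': "y' \<in> Y" and w: "inW k W y" "inW k W y'"
        obtain u where u: "f y = Fin u" using fu y by blast
        obtain u' where u': "f y' = Fin u'" using fu y' by blast
        have i1: "Fin u \<in> ivl (\<gamma> - e) (\<gamma> + e)" using W(2) y w(1) u by metis
        have i2: "Fin u' \<in> ivl (\<gamma> - e) (\<gamma> + e)" using W(2) y' w(2) u' by metis
        have "\<gamma> - e < u" "u < \<gamma> + e" "\<gamma> - e < u'" "u' < \<gamma> + e"
          using i1 i2 unfolding ivl_def by auto
        then have lt1: "\<bar>u - u'\<bar> < 2 * e" by (simp add: abs_less_iff)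
        have dpos: "(0::'k) < of_nat d" using d by simp
        have "\<bar>of_nat d * (u - u')\<bar> = of_nat d * \<bar>u - u'\<bar>" by (simp add: abs_mult)
        also have "\<dots> < of_nat d * (2 * e)" using mult_strict_left_mono[OF lt1 dpos] .
        also have "of_nat d * (2 * e) = 1" unfolding e_def using d by simp
        finally have lt: "\<bar>of_nat d * (u - u')\<bar> < 1" .
        have "of_nat d * (u - u') \<in> Z" using fd y y' u u' by fastforce
        then have "of_nat d * (u - u') = 0" using Zsmall lt by blast
        then have "u = u'" using dpos by simp
        then show "f y = f y'" using u u' by simp
      qed
      then show ?thesis using W(1) by blast
    qed
  qed
qed

lemma nmult_add: "x \<in> nmult Z n \<Longrightarrow> y \<in> nmult Z n \<Longrightarrow> x + y \<in> nmult Z n"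
proof -
  assume "x \<in> nmult Z n" "y \<in> nmult Z n"
  then obtain a b where "a \<in> Z" "b \<in> Z" "x = of_nat n * a" "y = of_nat n * b"
    unfolding nmult_iff by blast
  then have "x + y = of_nat n * (a + b)" by (simp add: distrib_left)
  moreover have "a + b \<in> Z" using Zadd \<open>a \<in> Z\<close> \<open>b \<in> Z\<close> by blast
  ultimately show ?thesis unfolding nmult_iff by blast
qed

lemma pick:
  assumes z: "z \<in> Z" and c: "c \<in> divhull Z" and Nn: "Nn \<ge> 1" and zV: "Fin z \<le> V"
    and V: "V = PInf \<or> (\<exists>w. V = Fin w \<and> w \<in> divhull Z \<and> c + of_nat Nn < w)"
  shows "\<exists>x\<in>Z. c < x \<and> z \<le> x \<and> Fin x \<le> V \<and> x - z \<in> nmult Z Nn"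
proof (cases "c < z")
  case True
  have "z - z \<in> nmult Z Nn" unfolding nmult_iff using Z0 by (intro bexI[of _ 0]) simp_all
  then show ?thesis using True z zV by (intro bexI[of _ z] conjI) simp_all
next
  case False
  then have zc: "z \<le> c" by simp
  have Npos: "(1::'k) \<le> of_nat Nn" using Nn by simp
  from V show ?thesis
  proof (elim disjE exE conjE)
    assume VP: "V = PInf"
    obtain t where t: "t \<in> Z" "c - z < t" using aboveZ[OF dh_diff[OF c Zdivhull[OF z]]] by blast
    have t0: "0 \<le> t" using t zc by linarith
    have "0 \<le> (of_nat Nn - 1) * t" using t0 Npos by simp
    then have "t \<le> of_nat Nn * t" by (simp add: left_diff_distrib)
    then have "c < z + of_nat Nn * t" using t by linarith
    moreover have "z + of_nat Nn * t \<in> Z" using Zadd[OF z Znat[OF t(1)]] .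
    moreover have "z \<le> z + of_nat Nn * t" using t0 by simp
    moreover have "(z + of_nat Nn * t) - z \<in> nmult Z Nn" unfolding nmult_iff using t(1) by (intro bexI[of _ t]) simp_all
    ultimately show ?thesis using VP by (intro bexI[of _ "z + of_nat Nn * t"] conjI) simp_all
  next
    fix w assume w: "V = Fin w" "w \<in> divhull Z" "c + of_nat Nn < w"
    have Np: "(0::'k) < of_nat Nn" using Nn by simp
    have q: "(w - z) / of_nat Nn \<in> divhull Z"
    proof -
      have "(w - z) / of_nat Nn = (w - z) * (1 / of_nat Nn)" by simp
      obtain a :: nat where a: "a \<ge> 1" "of_nat a * (w - z) \<in> Z"
        using dh_diff[OF w(2) Zdivhull[OF z]] unfolding divhull_def by auto
      have "of_nat (a * Nn) * ((w - z) / of_nat Nn) = of_nat a * (w - z)" using Np by simp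
      then have i1: "of_nat (a * Nn) * ((w - z) / of_nat Nn) \<in> Z" using a(2) by simp
      have i2: "a * Nn \<ge> 1" using a(1) Nn by (simp add: Suc_le_eq)
      show ?thesis unfolding divhull_def using i1 i2 by blast
    qed
    obtain t where t: "t \<in> Z" "t \<le> (w - z) / of_nat Nn" "(w - z) / of_nat Nn < t + 1"
      using floorZ[OF q] by blast
    have "t * of_nat Nn \<le> w - z" using t(2) pos_le_divide_eq[OF Np] by blast
    then have t1: "of_nat Nn * t \<le> w - z" by (metis mult.commute)
    have "w - z < (t + 1) * of_nat Nn" using t(3) pos_divide_less_eq[OF Np] by blast
    moreover have "(t + 1) * of_nat Nn = of_nat Nn * t + of_nat Nn" by (simp add: algebra_simps)
    ultimately have t2: "w - z < of_nat Nn * t + of_nat Nn" by simp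
    have "0 \<le> w - z" using w(3) zc Np by linarith
    then have "0 \<le> (w - z) / of_nat Nn" using Np by simp
    then have "-1 < t" using t(3) by simp
    then have t0: "0 \<le> t"
    proof -
      assume "-1 < t"
      show "0 \<le> t"
      proof (rule ccontr)
        assume "\<not> 0 \<le> t"
        then have "0 < -t" by simp
        then have "1 \<le> -t" using Zpos[OF Zneg[OF t(1)]] by blast
        then show False using \<open>-1 < t\<close> by simp
      qed
    qed
    define x where "x = z + of_nat Nn * t"
    have "x \<in> Z" unfolding x_def using Zadd[OF z Znat[OF t(1)]] .
    moreover have "c < x" using t2 w(3) unfolding x_def by simp
    moreover have "z \<le> x" unfolding x_def using t0 by simp
    moreover have "Fin x \<le> V" using t1 w(1) unfolding x_def by simp
    moreover have "x - z \<in> nmult Z Nn" unfolding nmult_iff x_def using t(1) by (intro bexI[of _ t]) simp_all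
    ultimately show ?thesis by (intro bexI[of _ x] conjI) simp_all
  qed
qed

end


context zg begin

lemma exact_approx:
  assumes E: "E \<subseteq> GL m" and x: "x \<in> clos Z m E" and T: "nbh m x T"
  shows "\<exists>a\<in>E. \<forall>i<m. a ! i \<in> T i \<and> (x ! i \<noteq> PInf \<longrightarrow> a ! i = x ! i)"
proof -
  define V where "V i = (if x ! i = PInf then T i else T i \<inter> ivl (fin_val (x ! i) - 1) (fin_val (x ! i) + 1))" for i
  have "\<exists>a\<in>E. \<forall>i<m. a ! i \<in> V i"
  proof (rule clos_approx[OF x])
    fix i assume i: "i < m"
    have Ti: "basic_open Z (T i)" "x ! i \<in> T i" using T i unfolding nbh_def by auto
    show "basic_open Z (V i) \<and> x ! i \<in> V i"
    proof (cases "x ! i")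
      case PInf
      then show ?thesis using Ti unfolding V_def by simp
    next
      case (Fin v)
      have v: "v \<in> Z" using clos_gam[OF E x i] Fin by simp
      have vd: "v \<in> divhull Z" using Zdivhull[OF v] .
      have o1: "1 \<in> divhull Z" using Zdivhull[OF Z1] .
      have "basic_open Z (ivl (v - 1) (v + 1))" by (rule ivl_open[OF dh_diff[OF vd o1] dh_add[OF vd o1]])
      moreover have "Fin v \<in> ivl (v - 1) (v + 1)" using vd by (intro Fin_ivl) auto
      ultimately show ?thesis using Ti Fin basic_open_Int unfolding V_def by simp
    qed
  qed
  then obtain a where a: "a \<in> E" "\<forall>i<m. a ! i \<in> V i" by blast
  have aG: "a \<in> GL m" using a(1) E by blast
  have "\<forall>i<m. a ! i \<in> T i \<and> (x ! i \<noteq> PInf \<longrightarrow> a ! i = x ! i)"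
  proof (intro allI impI conjI)
    fix i assume i: "i < m"
    have aV: "a ! i \<in> V i" using a(2) i by blast
    then show "a ! i \<in> T i" unfolding V_def by (cases "x ! i = PInf") auto
    assume ne: "x ! i \<noteq> PInf"
    then obtain v where Fin: "x ! i = Fin v" by (cases "x ! i") auto
    have v: "v \<in> Z" using clos_gam[OF E x i] Fin by simp
    have ag: "a ! i \<in> gam Z" using nth_mem[of i a] i aG unfolding GL_def by auto
    have "a ! i \<in> ivl (v - 1) (v + 1)" using aV Fin unfolding V_def by simp
    then show "a ! i = x ! i" using gam_ivl_eq[OF v ag] Fin by simp
  qed
  then show ?thesis using a(1) by blast
qed

lemma lc_val: "largely_cont Z k Y f \<Longrightarrow> Y \<subseteq> GL k \<Longrightarrow> y \<in> Y \<Longrightarrow> f y \<in> omg Z"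
proof -
  assume lc: "largely_cont Z k Y f" and Y: "Y \<subseteq> GL k" and y: "y \<in> Y"
  obtain G where G1: "\<forall>y\<in>Y. G y = f y" and G2: "\<forall>x\<in>clos Z k Y. G x \<in> omg Z"
    using lc unfolding largely_cont_def by blast
  have "y \<in> clos Z k Y" using clos_ext_GL[OF Y] y by blast
  then show ?thesis using G1 G2 y by metis
qed

end

locale cell = zg Z for Z :: "'k::linordered_field set" +
  fixes N :: "nat list" and m :: nat and I :: "nat set" and A :: "'k ext list set"
  assumes lenN: "length N = m" and posN: "\<forall>k\<in>set N. k > 0" and Isub: "I \<subseteq> {0..<m}"
    and AF: "A \<subseteq> Fgam Z m I" and LVA: "LV N A"
begin

definition D :: "nat \<Rightarrow> 'k ext list set" where "D k = take k ` A"

lemma A_len: "a \<in> A \<Longrightarrow> length a = m" using AF unfolding Fgam_def by auto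
lemma A_GL: "A \<subseteq> GL m" using AF Fgam_GL by blast
lemma D_m: "D m = A" unfolding D_def by (rule img_id_on) (simp add: A_len)
lemma A_ne: "A \<noteq> {}" using LVA unfolding LV_def by simp

lemma D_Fgam: assumes k: "k \<le> m" shows "D k \<subseteq> Fgam Z k {i \<in> I. i < k}"
proof
  fix y assume "y \<in> D k"
  then obtain a where a: "a \<in> A" "y = take k a" unfolding D_def by blast
  have "a \<in> Fgam Z m I" using a(1) AF by blast
  then show "y \<in> Fgam Z k {i \<in> I. i < k}" using take_Fgam[OF _ k] a(2) by blast
qed

lemma D_len: "k \<le> m \<Longrightarrow> y \<in> D k \<Longrightarrow> length y = k"
  using D_Fgam unfolding Fgam_def by blast

lemma D_GL: "k \<le> m \<Longrightarrow> D k \<subseteq> GL k" using D_Fgam Fgam_GL by blast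

lemma D_fin: assumes k: "k \<le> m" shows "\<forall>y\<in>D k. \<forall>i\<in>{i \<in> I. i < k}. fin_val (y ! i) \<in> Z"
proof (intro ballI)
  fix y i assume y: "y \<in> D k" and i: "i \<in> {i \<in> I. i < k}"
  have "y \<in> Fgam Z k {i \<in> I. i < k}" using D_Fgam[OF k] y by blast
  then obtain z where "z \<in> Z" "y ! i = Fin z" using Fgam_nth_I[of y k "{i \<in> I. i < k}" i] i by auto
  then show "fin_val (y ! i) \<in> Z" by simp
qed

lemma N_pos: "k < m \<Longrightarrow> N ! k \<ge> 1"
  using posN lenN nth_mem[of k N] by (simp add: Suc_le_eq)

lemma butlast_D: assumes k: "k < m" and y: "y \<in> D (Suc k)" shows "butlast y \<in> D k"
proof -
  obtain a where a: "a \<in> A" "y = take (Suc k) a" using y unfolding D_def by blast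
  have "butlast y = take k a" using a A_len[OF a(1)] k by (simp add: butlast_take)
  then show ?thesis using a(1) unfolding D_def by blast
qed

lemma D_ext: assumes k: "k < m" and y: "y \<in> D k" shows "\<exists>a\<in>D (Suc k). butlast a = y"
proof -
  obtain a where a: "a \<in> A" "y = take k a" using y unfolding D_def by blast
  have "butlast (take (Suc k) a) = y" using a A_len[OF a(1)] k by (simp add: butlast_take)
  moreover have "take (Suc k) a \<in> D (Suc k)" using a(1) unfolding D_def by blast
  ultimately show ?thesis by blast
qed

lemma take_D: "a \<in> A \<Longrightarrow> take k a \<in> D k" unfolding D_def by blast

lemma lev: assumes k: "k < m" shows "lvl (N ! k) k {i \<in> I. i < Suc k} (D k) (D (Suc k))"
proof -
  have "Qd N A k" using LVA k lenN unfolding LV_def by simp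
  then obtain I' where I1: "take (Suc k) ` A \<subseteq> Fgam Z (Suc k) I'"
      and I2: "lvl (N ! k) k I' (take k ` A) (take (Suc k) ` A)"
    unfolding Qd_def by blast
  obtain a where a: "a \<in> A" using A_ne by blast
  have "take (Suc k) a \<in> Fgam Z (Suc k) I'" using I1 a by blast
  moreover have "take (Suc k) a \<in> Fgam Z (Suc k) {i \<in> I. i < Suc k}"
    using take_Fgam[of a m I "Suc k"] a AF k by auto
  ultimately have "I' = {i \<in> I. i < Suc k}" by (rule Fgam_unique)
  then show ?thesis using I2 unfolding D_def by simp
qed

lemma lev_data:
  assumes k: "k < m"
  obtains \<mu> \<nu> \<rho> where "affine_on Z {i \<in> I. i < k} (D k) \<mu>" "affine_on Z {i \<in> I. i < k} (D k) \<nu>"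
    "largely_cont Z k (D k) \<mu>" "largely_cont Z k (D k) \<nu>" "\<rho> < N ! k"
    "\<And>a. a \<in> D (Suc k) \<longleftrightarrow> (a \<in> Fgam Z (Suc k) {i \<in> I. i < Suc k} \<and> butlast a \<in> D k \<and>
        \<mu> (butlast a) \<le> a ! k \<and> a ! k \<le> \<nu> (butlast a) \<and> cong_ext Z (N ! k) (a ! k) (Fin (of_nat \<rho>)))"
proof -
  have e: "{i \<in> {i \<in> I. i < Suc k}. i < k} = {i \<in> I. i < k}" by auto
  show ?thesis using lev[OF k] that unfolding lvl_def e by blast
qed

lemma Fgam_snoc:
  assumes y: "y \<in> Fgam Z k {i \<in> I. i < k}" and v: "v \<in> gam Z" and vI: "v \<noteq> PInf \<longleftrightarrow> k \<in> I"
  shows "y @ [v] \<in> Fgam Z (Suc k) {i \<in> I. i < Suc k}"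
proof -
  have ly: "length y = k" and sy: "set y \<subseteq> gam Z" and Iy: "{i. i < k \<and> y ! i \<noteq> PInf} = {i \<in> I. i < k}"
    using y unfolding Fgam_def by auto
  have "{i. i < Suc k \<and> (y @ [v]) ! i \<noteq> PInf} = {i \<in> I. i < Suc k}"
  proof (rule set_eqI)
    fix i
    show "i \<in> {i. i < Suc k \<and> (y @ [v]) ! i \<noteq> PInf} \<longleftrightarrow> i \<in> {i \<in> I. i < Suc k}"
    proof (cases "i < k")
      case True
      then have "(y @ [v]) ! i = y ! i" using ly by (simp add: nth_append)
      then show ?thesis using True Iy by auto
    next
      case False
      show ?thesis
      proof (cases "i = k")
        case True
        then have "(y @ [v]) ! i = v" using ly nth_append_length[of y v "[]"] by simp
        then show ?thesis using True vI by auto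
      next
        case False
        then show ?thesis using \<open>\<not> i < k\<close> by auto
      qed
    qed
  qed
  moreover have "length (y @ [v]) = Suc k" using ly by simp
  moreover have "set (y @ [v]) \<subseteq> gam Z" using sy v by simp
  ultimately show ?thesis unfolding Fgam_def by blast
qed

lemma snoc_facts: "length y = k \<Longrightarrow> butlast (y @ [v]) = y \<and> (y @ [v]) ! k = v"
  using nth_append_length[of y v "[]"] by simp

end

locale core = cell +
  fixes K :: "nat set" and b and j :: nat
  assumes bcl: "b \<in> clos Z m A" and bK: "b \<in> Fgam Z m K" and KI: "K \<subseteq> I"
    and jI: "j \<in> I" and jK: "j \<notin> K" and jmin: "\<forall>i<j. i \<in> I \<longrightarrow> i \<in> K"
begin

lemma jm: "j < m" using jI Isub by auto
lemma b_len: "length b = m" using bK unfolding Fgam_def by auto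

lemma pre_approx: assumes T: "basic_open Z T" "PInf \<in> T"
  shows "\<exists>a\<in>A. take j a = take j b \<and> a ! j \<in> T"
proof -
  define T' where "T' i = (if i = j then T else dnb (b ! i))" for i
  have "nbh m b T'" unfolding nbh_def T'_def using T dnb closD_nth[OF bcl] Fgam_nth_notI[OF bK jm jK] by auto
  then obtain a where a: "a \<in> A" "\<forall>i<m. a ! i \<in> T' i \<and> (b ! i \<noteq> PInf \<longrightarrow> a ! i = b ! i)"
    using exact_approx[OF A_GL bcl] by blast
  have "take j a = take j b"
  proof (rule nth_equalityI)
    show "length (take j a) = length (take j b)" using A_len[OF a(1)] b_len by simp
    fix i assume i: "i < length (take j a)"
    then have ij: "i < j" and im: "i < m" using A_len[OF a(1)] jm by auto
    show "take j a ! i = take j b ! i"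
    proof (cases "b ! i = PInf")
      case True
      then have "i \<notin> K" using bK im unfolding Fgam_def by auto
      then have "i \<notin> I" using jmin ij by blast
      then have "a ! i = PInf" using Fgam_nth_notI[of a m I i] a(1) AF im by blast
      then show ?thesis using True ij by simp
    next
      case False
      then show ?thesis using a(2) im ij by simp
    qed
  qed
  moreover have "a ! j \<in> T" using a(2) jm unfolding T'_def by auto
  ultimately show ?thesis using a(1) by blast
qed

lemma bpre: "take j b \<in> D j"
proof -
  obtain a where "a \<in> A" "take j a = take j b" "a ! j \<in> up (-1)"
    using pre_approx[OF up_open[OF dh_neg[OF Zdivhull[OF Z1]]] PInf_up] by blast
  then show ?thesis using take_D by metis
qed

end


context core begin

lemma nbh_restrict: "nbh (Suc n) x W \<Longrightarrow> nbh n x W" unfolding nbh_def by auto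

lemma core_ind:
  assumes fib: "\<forall>p\<in>D j. \<forall>c\<in>divhull Z. \<exists>x\<in>Z. c < x \<and> p @ [Fin x] \<in> D (Suc j) \<and> Cc (Fin x)"
    and k: "Suc j \<le> k"
  shows "\<forall>W. k \<le> m \<longrightarrow> nbh k b W \<longrightarrow> (\<exists>y\<in>D k. Cc (y ! j) \<and> inW k W y)"
  using k
proof (induction k rule: dec_induct)
  case base
  show ?case
  proof (intro allI impI)
    fix W assume W: "nbh (Suc j) b W"
    have bj: "b ! j = PInf" using Fgam_nth_notI[OF bK jm jK] .
    have "basic_open Z (W j)" "PInf \<in> W j" using W bj unfolding nbh_def by auto
    then obtain c where c: "c \<in> divhull Z" "up c \<subseteq> W j" using basic_open_PInf by blast
    obtain x where x: "x \<in> Z" "c < x" "take j b @ [Fin x] \<in> D (Suc j)" "Cc (Fin x)"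
      using fib bpre c(1) by blast
    define y where "y = take j b @ [Fin x]"
    have ly: "length (take j b) = j" using b_len jm by simp
    have yj: "y ! j = Fin x" unfolding y_def using snoc_facts[OF ly] by blast
    have "inW (Suc j) W y" unfolding inW_def
    proof (intro allI impI)
      fix i assume i: "i < Suc j"
      show "y ! i \<in> W i"
      proof (cases "i < j")
        case True
        then have "y ! i = b ! i" unfolding y_def using ly by (simp add: nth_append)
        then show ?thesis using W True unfolding nbh_def by auto
      next
        case False
        then have ij: "i = j" using i by simp
        have "Fin x \<in> up c" unfolding up_def using x(1,2) Zdivhull by simp
        then show ?thesis using ij yj c(2) by auto
      qed
    qed
    moreover have "Cc (y ! j)" using x(4) yj by simp
    moreover have "y \<in> D (Suc j)" using x(3) unfolding y_def .
    ultimately show "\<exists>y\<in>D (Suc j). Cc (y ! j) \<and> inW (Suc j) W y" by blast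
  qed
next
  case (step n)
  have jn: "j < n" using step.hyps(1) by simp
  show ?case
  proof (intro allI impI)
    fix W assume nm1: "Suc n \<le> m" and W: "nbh (Suc n) b W"
    have nm: "n < m" using nm1 by simp
    have IH: "\<And>W. nbh n b W \<Longrightarrow> \<exists>y\<in>D n. Cc (y ! j) \<and> inW n W y"
      using step.IH nm by auto
    obtain \<mu> \<nu> \<rho> where h1: "affine_on Z {i \<in> I. i < n} (D n) \<mu>" and h2: "affine_on Z {i \<in> I. i < n} (D n) \<nu>"
      and h3: "largely_cont Z n (D n) \<mu>" and h4: "largely_cont Z n (D n) \<nu>" and h5: "\<rho> < N ! n"
      and memb: "\<And>a. a \<in> D (Suc n) \<longleftrightarrow> (a \<in> Fgam Z (Suc n) {i \<in> I. i < Suc n} \<and> butlast a \<in> D n \<and>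
        \<mu> (butlast a) \<le> a ! n \<and> a ! n \<le> \<nu> (butlast a) \<and> cong_ext Z (N ! n) (a ! n) (Fin (of_nat \<rho>)))"
      using lev_data[OF nm] by blast
    have DnG: "D n \<subseteq> GL n" using D_GL[of n] nm by simp
    have finK: "finite {i \<in> I. i < n}" by simp
    have Dfin: "\<forall>y\<in>D n. \<forall>i\<in>{i \<in> I. i < n}. fin_val (y ! i) \<in> Z" using D_fin[of n] nm by simp
    have bn: "take n b \<in> clos Z n (D n)" unfolding D_def using clos_take[OF bcl] nm by simp
    have Wn: "nbh n b W" using nbh_restrict[OF W] .
    have Wnn: "basic_open Z (W n)" "b ! n \<in> W n" using W unfolding nbh_def by auto
    have tb: "\<And>i. i < n \<Longrightarrow> take n b ! i = b ! i" by simp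
    have nbh_tb: "\<And>V. nbh n (take n b) V \<Longrightarrow> nbh n b V" unfolding nbh_def by auto
    have inW_take: "\<And>V a. inW n V a \<Longrightarrow> inW n V (take n a)" unfolding inW_def by auto
    have inW_snoc: "\<And>V y v. length y = n \<Longrightarrow> inW n V y \<Longrightarrow> v \<in> V n \<Longrightarrow> inW (Suc n) V (y @ [v])"
      unfolding inW_def by (auto simp: nth_append less_Suc_eq)
    have Cc_snoc: "\<And>y v. length y = n \<Longrightarrow> (y @ [v]) ! j = y ! j" using jn by (simp add: nth_append)
    have D_len_n: "\<And>y. y \<in> D n \<Longrightarrow> length y = n" using D_len[of n] nm by simp
    have yFg: "\<And>y. y \<in> D n \<Longrightarrow> y \<in> Fgam Z n {i \<in> I. i < n}" using D_Fgam[of n] nm by auto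
    have take_memb: "\<And>a. a \<in> A \<Longrightarrow> \<mu> (take n a) \<le> a ! n \<and> a ! n \<le> \<nu> (take n a) \<and>
        cong_ext Z (N ! n) (a ! n) (Fin (of_nat \<rho>))"
    proof -
      fix a assume a: "a \<in> A"
      have "take (Suc n) a \<in> D (Suc n)" using take_D[OF a] .
      moreover have "butlast (take (Suc n) a) = take n a" using A_len[OF a] nm by (simp add: butlast_take)
      moreover have "take (Suc n) a ! n = a ! n" by simp
      ultimately show "\<mu> (take n a) \<le> a ! n \<and> a ! n \<le> \<nu> (take n a) \<and>
        cong_ext Z (N ! n) (a ! n) (Fin (of_nat \<rho>))" using memb by metis
    qed
    consider (notI) "n \<notin> I" | (inK) "n \<in> K" | (IK) "n \<in> I" "n \<notin> K" using KI by blast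
    then show "\<exists>y\<in>D (Suc n). Cc (y ! j) \<and> inW (Suc n) W y"
    proof cases
      case notI
      obtain y where y: "y \<in> D n" "Cc (y ! j)" "inW n W y" using IH[OF Wn] by blast
      obtain a where a: "a \<in> D (Suc n)" "butlast a = y" using D_ext[OF nm y(1)] by blast
      have aF: "a \<in> Fgam Z (Suc n) {i \<in> I. i < Suc n}" using memb a(1) by blast
      have la: "length a = Suc n" using aF unfolding Fgam_def by simp
      have an: "a ! n = PInf" using Fgam_nth_notI[OF aF] notI by simp
      have bnP: "b ! n = PInf" using Fgam_nth_notI[OF bK nm] notI KI by blast
      have ay: "a = y @ [PInf]"
      proof -
        have "a = butlast a @ [last a]" using la by (metis append_butlast_last_id list.size(3) nat.simps(3))
        moreover have "last a = a ! n"
        proof -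
          have "a \<noteq> []" using la by auto
          then show ?thesis using last_conv_nth[of a] la by simp
        qed
        ultimately show ?thesis using a(2) an by simp
      qed
      have "inW (Suc n) W a" unfolding ay using inW_snoc[OF D_len_n[OF y(1)] y(3)] Wnn bnP by simp
      moreover have "Cc (a ! j)" unfolding ay using Cc_snoc[OF D_len_n[OF y(1)]] y(2) by simp
      ultimately show ?thesis using a(1) by blast
    next
      case inK
      have nI: "n \<in> I" using inK KI by blast
      obtain v where v: "v \<in> Z" "b ! n = Fin v" using Fgam_nth_I[OF bK nm inK] by blast
      have vd: "v \<in> divhull Z" using Zdivhull[OF v(1)] .
      obtain W1 where W1: "nbh n (take n b) W1" and s1: "\<forall>y\<in>D n. \<forall>y'\<in>D n. inW n W1 y \<longrightarrow> inW n W1 y' \<longrightarrow>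
             (\<mu> y = \<mu> y' \<or> (Fin v < \<mu> y \<and> Fin v < \<mu> y'))"
        using lim_stable[OF h1 finK Dfin h3 DnG bn vd] by blast
      obtain W2 where W2: "nbh n (take n b) W2" and s2: "\<forall>y\<in>D n. \<forall>y'\<in>D n. inW n W2 y \<longrightarrow> inW n W2 y' \<longrightarrow>
             (\<nu> y = \<nu> y' \<or> (Fin v < \<nu> y \<and> Fin v < \<nu> y'))"
        using lim_stable[OF h2 finK Dfin h4 DnG bn vd] by blast
      define W' where "W' = (\<lambda>i. W i \<inter> ((\<lambda>i. W1 i \<inter> W2 i) i))"
      have W'n: "nbh n b W'" unfolding W'_def by (intro nbh_Int Wn nbh_tb W1 W2)
      define T where "T i = (if i < n then W' i else if i = n then W n else dnb (b ! i))" for i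
      have "nbh m b T" unfolding nbh_def
      proof (intro allI impI)
        fix i assume i: "i < m"
        show "basic_open Z (T i) \<and> b ! i \<in> T i"
          using W'n Wnn dnb[OF closD_nth[OF bcl i]] unfolding T_def nbh_def by auto
      qed
      then obtain a where a: "a \<in> A" "\<forall>i<m. a ! i \<in> T i \<and> (b ! i \<noteq> PInf \<longrightarrow> a ! i = b ! i)"
        using exact_approx[OF A_GL bcl] by blast
      have an: "a ! n = Fin v" using a(2) nm v(2) by auto
      have aW': "inW n W' (take n a)" unfolding inW_def
      proof (intro allI impI)
        fix i assume i: "i < n"
        then have "i < m" using nm by simp
        then have "a ! i \<in> T i" using a(2) by blast
        then show "take n a ! i \<in> W' i" using i by (simp add: T_def)
      qed
      have ta: "take n a \<in> D n" using take_D[OF a(1)] .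
      have am: "\<mu> (take n a) \<le> Fin v" "Fin v \<le> \<nu> (take n a)" "cong_ext Z (N ! n) (Fin v) (Fin (of_nat \<rho>))"
        using take_memb[OF a(1)] an by auto
      obtain y where y: "y \<in> D n" "Cc (y ! j)" "inW n W' y" using IH[OF W'n] by blast
      have yW: "inW n W y" "inW n W1 y" "inW n W2 y" using y(3) unfolding W'_def inW_def by auto
      have aW: "inW n W1 (take n a)" "inW n W2 (take n a)" using aW' unfolding W'_def inW_def by auto
      have mu: "\<mu> y \<le> Fin v"
      proof -
        have "\<mu> y = \<mu> (take n a) \<or> (Fin v < \<mu> y \<and> Fin v < \<mu> (take n a))"
          using s1 y(1) ta yW(2) aW(1) by blast
        then show ?thesis using am(1) by auto
      qed
      have nu: "Fin v \<le> \<nu> y"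
      proof -
        have "\<nu> y = \<nu> (take n a) \<or> (Fin v < \<nu> y \<and> Fin v < \<nu> (take n a))"
          using s2 y(1) ta yW(3) aW(2) by blast
        then show ?thesis using am(2) by auto
      qed
      have ly: "length y = n" using D_len_n[OF y(1)] .
      have sf: "butlast (y @ [Fin v]) = y" "(y @ [Fin v]) ! n = Fin v" using snoc_facts[OF ly] by auto
      have "y @ [Fin v] \<in> Fgam Z (Suc n) {i \<in> I. i < Suc n}"
        by (rule Fgam_snoc[OF yFg[OF y(1)]]) (use v nI in auto)
      then have yD: "y @ [Fin v] \<in> D (Suc n)" using memb sf y(1) mu nu am(3) by auto
      have "inW (Suc n) W (y @ [Fin v])" using inW_snoc[OF ly yW(1)] Wnn v(2) by simp
      moreover have "Cc ((y @ [Fin v]) ! j)" using Cc_snoc[OF ly] y(2) by simp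
      ultimately show ?thesis using yD by blast
    next
      case IK
      have bnP: "b ! n = PInf" using Fgam_nth_notI[OF bK nm IK(2)] .
      obtain c where c: "c \<in> divhull Z" "up c \<subseteq> W n" using basic_open_PInf Wnn bnP by metis
      obtain g where g: "g \<in> omg Z" and gT: "\<And>T. basic_open Z T \<Longrightarrow> g \<in> T \<Longrightarrow>
           (\<exists>V. nbh n (take n b) V \<and> (\<forall>y\<in>D n. inW n V y \<longrightarrow> \<nu> y \<in> T))"
        using lc_limit[OF h4 DnG bn] by blast
      have gP: "g = PInf"
      proof (rule ccontr)
        assume "g \<noteq> PInf"
        then obtain h where h: "g = Fin h" by (cases g) auto
        have hd: "h \<in> divhull Z" using g h by simp
        have o1: "1 \<in> divhull Z" using Zdivhull[OF Z1] .
        have T: "basic_open Z (ivl (h - 1) (h + 1))" by (rule ivl_open[OF dh_diff[OF hd o1] dh_add[OF hd o1]])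
        have "g \<in> ivl (h - 1) (h + 1)" unfolding h using hd by (intro Fin_ivl) auto
        then obtain V where V: "nbh n (take n b) V" "\<forall>y\<in>D n. inW n V y \<longrightarrow> \<nu> y \<in> ivl (h - 1) (h + 1)"
          using gT[OF T] by blast
        define T' where "T' i = (if i < n then V i else if i = n then up (h + 1) else dnb (b ! i))" for i
        have "nbh m b T'" unfolding nbh_def
        proof (intro allI impI)
          fix i assume i: "i < m"
          show "basic_open Z (T' i) \<and> b ! i \<in> T' i"
            using nbh_tb[OF V(1)] up_open[OF dh_add[OF hd o1]] PInf_up bnP dnb[OF closD_nth[OF bcl i]]
            unfolding T'_def nbh_def by auto
        qed
        then obtain a where a: "a \<in> A" "\<forall>i<m. a ! i \<in> T' i \<and> (b ! i \<noteq> PInf \<longrightarrow> a ! i = b ! i)"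
          using exact_approx[OF A_GL bcl] by blast
        have "a ! n \<in> T' n" using a(2) nm by blast
        then have an: "a ! n \<in> up (h + 1)" unfolding T'_def by simp
        have aV: "inW n V (take n a)" unfolding inW_def
        proof (intro allI impI)
          fix i assume i: "i < n"
          then have "i < m" using nm by simp
          then have "a ! i \<in> T' i" using a(2) by blast
          then show "take n a ! i \<in> V i" using i by (simp add: T'_def)
        qed
        have "\<nu> (take n a) \<in> ivl (h - 1) (h + 1)" using V(2) take_D[OF a(1)] aV by blast
        then have l1: "\<nu> (take n a) < Fin (h + 1)" unfolding ivl_def by auto
        have l2: "Fin (h + 1) < a ! n" using an unfolding up_def by auto
        have l3: "a ! n \<le> \<nu> (take n a)" using take_memb[OF a(1)] by blast
        show False using l1 l2 l3 by auto
      qed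
      have Nd: "of_nat (N ! n) \<in> divhull Z" using Zdivhull[OF Zofnat] .
      have cN: "c + of_nat (N ! n) \<in> divhull Z" using dh_add[OF c(1) Nd] .
      obtain V where V: "nbh n (take n b) V" "\<forall>y\<in>D n. inW n V y \<longrightarrow> \<nu> y \<in> up (c + of_nat (N ! n))"
        using gT[OF up_open[OF cN]] gP PInf_up by blast
      define W' where "W' = (\<lambda>i. W i \<inter> V i)"
      have W'n: "nbh n b W'" unfolding W'_def by (intro nbh_Int Wn nbh_tb V(1))
      obtain y where y: "y \<in> D n" "Cc (y ! j)" "inW n W' y" using IH[OF W'n] by blast
      have yW: "inW n W y" "inW n V y" using y(3) unfolding W'_def inW_def by auto
      have nuy: "\<nu> y \<in> up (c + of_nat (N ! n))" using V(2) y(1) yW(2) by blast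
      obtain a0 where a0: "a0 \<in> D (Suc n)" "butlast a0 = y" using D_ext[OF nm y(1)] by blast
      have ly: "length y = n" using D_len_n[OF y(1)] .
      have a0F: "a0 \<in> Fgam Z (Suc n) {i \<in> I. i < Suc n}" using memb a0(1) by blast
      obtain z where z: "z \<in> Z" "a0 ! n = Fin z" using Fgam_nth_I[OF a0F] IK(1) by auto
      have a0m: "\<mu> y \<le> Fin z" "Fin z \<le> \<nu> y" "cong_ext Z (N ! n) (Fin z) (Fin (of_nat \<rho>))"
        using memb a0 z(2) by auto
      have Vcase: "\<nu> y = PInf \<or> (\<exists>w. \<nu> y = Fin w \<and> w \<in> divhull Z \<and> c + of_nat (N ! n) < w)"
        using nuy unfolding up_def by (cases "\<nu> y") auto
      obtain x where x: "x \<in> Z" "c < x" "z \<le> x" "Fin x \<le> \<nu> y" "x - z \<in> nmult Z (N ! n)"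
        using pick[OF z(1) c(1) N_pos[OF nm] a0m(2) Vcase] by blast
      have cong: "cong_ext Z (N ! n) (Fin x) (Fin (of_nat \<rho>))"
      proof -
        have "z - of_nat \<rho> \<in> nmult Z (N ! n)" using a0m(3) by simp
        then have "(x - z) + (z - of_nat \<rho>) \<in> nmult Z (N ! n)" using nmult_add x(5) by blast
        then show ?thesis by simp
      qed
      have sf: "butlast (y @ [Fin x]) = y" "(y @ [Fin x]) ! n = Fin x" using snoc_facts[OF ly] by auto
      have "y @ [Fin x] \<in> Fgam Z (Suc n) {i \<in> I. i < Suc n}"
        by (rule Fgam_snoc[OF yFg[OF y(1)]]) (use x IK in auto)
      moreover have "\<mu> y \<le> Fin x" using a0m(1) x(3) order_trans by fastforce
      ultimately have yD: "y @ [Fin x] \<in> D (Suc n)" using memb sf y(1) x(4) cong by auto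
      have "Fin x \<in> W n" using c(2) x(1,2) Zdivhull unfolding up_def by auto
      then have "inW (Suc n) W (y @ [Fin x])" using inW_snoc[OF ly yW(1)] by simp
      moreover have "Cc ((y @ [Fin x]) ! j)" using Cc_snoc[OF ly] y(2) by simp
      ultimately show ?thesis using yD by blast
    qed
  qed
qed

end


lemma chain_max:
  assumes "finite S" "S \<noteq> {}"
    and tot: "\<forall>x\<in>S. \<forall>y\<in>S. P x y \<or> P y x"
    and tr: "\<forall>x\<in>S. \<forall>y\<in>S. \<forall>z\<in>S. P x y \<longrightarrow> P y z \<longrightarrow> P x z"
  shows "\<exists>M\<in>S. \<forall>x\<in>S. P x M"
  using assms
proof (induction S rule: finite_ne_induct)
  case (singleton x)
  have "P x x" using singleton.prems(1) by blast
  then show ?case by blast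
next
  case (insert x F)
  have tot': "\<forall>x\<in>F. \<forall>y\<in>F. P x y \<or> P y x"
    using insert.prems(1) by (meson insertCI)
  have tr': "\<forall>x\<in>F. \<forall>y\<in>F. \<forall>z\<in>F. P x y \<longrightarrow> P y z \<longrightarrow> P x z"
    using insert.prems(2) by (meson insertCI)
  obtain M where M: "M \<in> F" "\<forall>y\<in>F. P y M" using insert.IH[OF tot' tr'] by blast
  show ?case
  proof (cases "P M x")
    case True
    have "\<forall>y\<in>insert x F. P y x"
    proof
      fix y assume y: "y \<in> insert x F"
      show "P y x"
      proof (cases "y = x")
        case True
        have "P x x" using insert.prems(1) by blast
        then show ?thesis using True by simp
      next
        case False
        then have yF: "y \<in> F" using y by simp
        have "P y M" using M(2) yF by blast
        moreover have "P y M \<longrightarrow> P M x \<longrightarrow> P y x" using insert.prems(2) yF M(1) by blast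
        ultimately show ?thesis using True by blast
      qed
    qed
    then show ?thesis by blast
  next
    case False
    then have "P x M" using insert.prems(1) M(1) by blast
    then have "\<forall>y\<in>insert x F. P y M" using M(2) by blast
    then show ?thesis using M(1) by blast
  qed
qed

context zg begin
lemma nbh_dnb: assumes x: "x \<in> clos Z m E" shows "nbh m x (\<lambda>i. dnb (x ! i))"
  unfolding nbh_def
proof (intro allI impI)
  fix i assume "i < m"
  then show "basic_open Z (dnb (x ! i)) \<and> x ! i \<in> dnb (x ! i)" by (intro dnb closD_nth[OF x])
qed
end

context cell begin

lemma face_I: "clos Z m A \<inter> Fgam Z m I = A"
proof
  show "A \<subseteq> clos Z m A \<inter> Fgam Z m I" using clos_ext_GL[OF A_GL] AF by blast
  show "clos Z m A \<inter> Fgam Z m I \<subseteq> A"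
  proof
    fix x assume x: "x \<in> clos Z m A \<inter> Fgam Z m I"
    have xc: "x \<in> clos Z m A" and xF: "x \<in> Fgam Z m I" using x by auto
    have "nbh m x (\<lambda>i. dnb (x ! i))" by (rule nbh_dnb[OF xc])
    then obtain a where a: "a \<in> A" "\<forall>i<m. (x ! i \<noteq> PInf \<longrightarrow> a ! i = x ! i)"
      using exact_approx[OF A_GL xc] by blast
    have "a = x"
    proof (rule nth_equalityI)
      show "length a = length x" using A_len[OF a(1)] closD[OF xc] by simp
      fix i assume "i < length a"
      then have i: "i < m" using A_len[OF a(1)] by simp
      show "a ! i = x ! i"
      proof (cases "x ! i = PInf")
        case True
        then have "i \<notin> I" using xF i unfolding Fgam_def by auto
        then have "a ! i = PInf" using Fgam_nth_notI[of a m I i] a(1) AF i by blast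
        then show ?thesis using True by simp
      next
        case False
        then show ?thesis using a(2) i by blast
      qed
    qed
    then show "x \<in> A" using a(1) by simp
  qed
qed

lemma face_sub: assumes c: "c \<in> clos Z m A" "c \<in> Fgam Z m K" shows "K \<subseteq> I"
proof
  fix i assume iK: "i \<in> K"
  have i: "i < m" "c ! i \<noteq> PInf" using c(2) iK unfolding Fgam_def by auto
  have "nbh m c (\<lambda>i. dnb (c ! i))" by (rule nbh_dnb[OF c(1)])
  then obtain a where a: "a \<in> A" "\<forall>i<m. (c ! i \<noteq> PInf \<longrightarrow> a ! i = c ! i)"
    using exact_approx[OF A_GL c(1)] by blast
  have "a ! i \<noteq> PInf" using a(2) i by auto
  then show "i \<in> I" using Fgam_nth_notI[of a m I i] a(1) AF i(1) by blast
qed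

lemma clos_sub_restrict:
  assumes P: "P \<subseteq> A" and x: "x \<in> clos Z m P" and xA: "x \<in> A"
  shows "x \<in> P"
proof -
  have PG: "P \<subseteq> GL m" using P A_GL by blast
  have "nbh m x (\<lambda>i. dnb (x ! i))" by (rule nbh_dnb[OF x])
  then obtain a where a: "a \<in> P" "\<forall>i<m. (x ! i \<noteq> PInf \<longrightarrow> a ! i = x ! i)"
    using exact_approx[OF PG x] by blast
  have aA: "a \<in> A" using a(1) P by blast
  have xF: "x \<in> Fgam Z m I" using xA AF by blast
  have "a = x"
  proof (rule nth_equalityI)
    show "length a = length x" using A_len[OF aA] A_len[OF xA] by simp
    fix i assume "i < length a"
    then have i: "i < m" using A_len[OF aA] by simp
    show "a ! i = x ! i"
    proof (cases "x ! i = PInf")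
      case True
      then have "i \<notin> I" using xF i unfolding Fgam_def by auto
      then have "a ! i = PInf" using Fgam_nth_notI[of a m I i] aA AF i by blast
      then show ?thesis using True by simp
    next
      case False
      then show ?thesis using a(2) i by blast
    qed
  qed
  then show ?thesis using a(1) by simp
qed

end

context core begin

lemma core_clos:
  assumes fib: "\<forall>p\<in>D j. \<forall>c\<in>divhull Z. \<exists>x\<in>Z. c < x \<and> p @ [Fin x] \<in> D (Suc j) \<and> Cc (Fin x)"
  shows "b \<in> clos Z m {a \<in> A. Cc (a ! j)}"
proof (rule closI)
  show "length b = m" "set b \<subseteq> omg Z" using closD[OF bcl] by auto
  fix Ss assume Ss: "basic_nbhd Z m b Ss"
  have W: "nbh m b (\<lambda>i. Ss ! i)" using Ss unfolding nbh_def basic_nbhd_def by blast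
  have jm1: "Suc j \<le> m" using jm by simp
  have ci: "\<forall>W. m \<le> m \<longrightarrow> nbh m b W \<longrightarrow> (\<exists>y\<in>D m. Cc (y ! j) \<and> inW m W y)"
    by (rule core_ind[OF fib jm1])
  obtain y where y: "y \<in> D m" "Cc (y ! j)" "inW m (\<lambda>i. Ss ! i) y"
    using ci[rule_format, OF order_refl W] by blast
  have "y \<in> {a \<in> A. Cc (a ! j)}" using y(1,2) D_m by simp
  moreover have "\<forall>i<m. y ! i \<in> Ss ! i" using y(3) unfolding inW_def by blast
  ultimately show "\<exists>a\<in>{a \<in> A. Cc (a ! j)}. \<forall>i<m. a ! i \<in> Ss ! i" by blast
qed

lemma fib_gen:
  assumes n1: "n \<ge> 1" and s: "s < n"
    and a1: "affine_on Z {i \<in> I. i < j} (D j) \<nu>" and lcn: "largely_cont Z j (D j) \<nu>"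
    and memb: "\<And>a. a \<in> D (Suc j) \<longleftrightarrow> (a \<in> Fgam Z (Suc j) {i \<in> I. i < Suc j} \<and> butlast a \<in> D j \<and>
        \<mu> (butlast a) \<le> a ! j \<and> a ! j \<le> \<nu> (butlast a) \<and> cong_ext Z (N ! j) (a ! j) (Fin (of_nat \<rho>)))"
  shows "\<forall>p\<in>D j. \<forall>c\<in>divhull Z. \<exists>x\<in>Z. c < x \<and> p @ [Fin x] \<in> D (Suc j) \<and>
           cong_ext Z (n * N ! j) (Fin x) (Fin (of_nat (\<rho> + N ! j * s)))"
proof -
  have DjG: "D j \<subseteq> GL j" using D_GL[of j] jm by simp
  have nuP: "\<forall>p\<in>D j. \<nu> p = PInf"
  proof (rule ccontr)
    assume "\<not> (\<forall>p\<in>D j. \<nu> p = PInf)"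
    then obtain \<alpha>0 \<alpha> where fy: "\<forall>y\<in>D j. \<nu> y = Fin (\<alpha>0 + (\<Sum>i\<in>{i \<in> I. i < j}. of_rat (\<alpha> i) * fin_val (y ! i)))"
      using a1 unfolding affine_on_def by blast
    define w0 where "w0 = \<alpha>0 + (\<Sum>i\<in>{i \<in> I. i < j}. of_rat (\<alpha> i) * fin_val (take j b ! i))"
    have nb: "\<nu> (take j b) = Fin w0" using fy bpre unfolding w0_def by blast
    have "\<nu> (take j b) \<in> omg Z" using lc_val[OF lcn DjG bpre] .
    then have w0d: "w0 \<in> divhull Z" using nb by simp
    obtain a where a: "a \<in> A" "take j a = take j b" "a ! j \<in> up w0"
      using pre_approx[OF up_open[OF w0d] PInf_up] by blast
    have ta: "take (Suc j) a \<in> D (Suc j)" using take_D[OF a(1)] .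
    have bt: "butlast (take (Suc j) a) = take j a" using A_len[OF a(1)] jm by (simp add: butlast_take)
    have "take (Suc j) a ! j \<le> \<nu> (butlast (take (Suc j) a))" using memb ta by blast
    then have l1: "a ! j \<le> Fin w0" using bt a(2) nb by simp
    have l2: "Fin w0 < a ! j" using a(3) unfolding up_def by simp
    show False using l1 l2 by simp
  qed
  show ?thesis
  proof (intro ballI)
    fix p c assume p: "p \<in> D j" and c: "c \<in> divhull Z"
    obtain a0 where a0: "a0 \<in> D (Suc j)" "butlast a0 = p" using D_ext[OF jm p] by blast
    have a0F: "a0 \<in> Fgam Z (Suc j) {i \<in> I. i < Suc j}" using memb a0(1) by blast
    obtain z where z: "z \<in> Z" "a0 ! j = Fin z" using Fgam_nth_I[OF a0F] jI by auto
    have muz: "\<mu> p \<le> Fin z" using memb a0 z(2) by auto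
    have zd: "z \<in> divhull Z" using Zdivhull[OF z(1)] .
    have md: "max c (max z 0) \<in> divhull Z" using dh_max[OF c dh_max[OF zd Zdivhull[OF Z0]]] .
    obtain t where t: "t \<in> Z" "max c (max z 0) < t" using aboveZ[OF md] by blast
    have tc: "c < t" "z < t" "0 < t" using t(2) by auto
    define Mn where "Mn = n * N ! j"
    have Mn1: "Mn \<ge> 1" unfolding Mn_def using n1 N_pos[OF jm] by (simp add: Suc_le_eq)
    define x where "x = of_nat (\<rho> + N ! j * s) + of_nat Mn * t"
    have xZ: "x \<in> Z" unfolding x_def using Zadd[OF Zofnat Znat[OF t(1)]] .
    have "0 \<le> (of_nat Mn - 1) * t" using Mn1 tc(3) by simp
    then have "t \<le> of_nat Mn * t" by (simp add: left_diff_distrib)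
    moreover have "0 \<le> x - of_nat Mn * t" unfolding x_def by simp
    ultimately have xt: "t \<le> x" by linarith
    have ly: "length p = j" using D_len[of j p] jm p by simp
    have sf: "butlast (p @ [Fin x]) = p" "(p @ [Fin x]) ! j = Fin x" using snoc_facts[OF ly] by auto
    have pF: "p \<in> Fgam Z j {i \<in> I. i < j}" using D_Fgam[of j] jm p by auto
    have F1: "p @ [Fin x] \<in> Fgam Z (Suc j) {i \<in> I. i < Suc j}"
      by (rule Fgam_snoc[OF pF]) (use xZ jI in auto)
    have "Fin z \<le> Fin x" using xt tc(2) by simp
    then have c1: "\<mu> p \<le> Fin x" by (rule order_trans[OF muz])
    have c2: "Fin x \<le> \<nu> p" using nuP p by simp
    have c3: "cong_ext Z (N ! j) (Fin x) (Fin (of_nat \<rho>))"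
    proof -
      have e: "x - of_nat \<rho> = of_nat (N ! j) * (of_nat s + of_nat n * t)"
        unfolding x_def Mn_def by (simp add: algebra_simps)
      have "of_nat s + of_nat n * t \<in> Z" using Zadd[OF Zofnat Znat[OF t(1)]] .
      then show ?thesis unfolding cong_ext.simps nmult_iff e by blast
    qed
    have "p @ [Fin x] \<in> D (Suc j)" using memb F1 sf p c1 c2 c3 by auto
    moreover have "cong_ext Z (n * N ! j) (Fin x) (Fin (of_nat (\<rho> + N ! j * s)))"
    proof -
      have e: "x - of_nat (\<rho> + N ! j * s) = of_nat (n * N ! j) * t" unfolding x_def Mn_def by simp
      show ?thesis unfolding cong_ext.simps nmult_iff e using t(1) by blast
    qed
    moreover have "c < x" using tc(1) xt by simp
    ultimately show "\<exists>x\<in>Z. c < x \<and> p @ [Fin x] \<in> D (Suc j) \<and>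
           cong_ext Z (n * N ! j) (Fin x) (Fin (of_nat (\<rho> + N ! j * s)))" using xZ by blast
  qed
qed

end


context zg begin

lemma congM_N: assumes "x - of_nat (\<rho> + Nj * s) \<in> nmult Z (n * Nj)" shows "x - of_nat \<rho> \<in> nmult Z Nj"
proof -
  obtain w where w: "w \<in> Z" "x - of_nat (\<rho> + Nj * s) = of_nat (n * Nj) * w" using assms unfolding nmult_iff by blast
  have "x - of_nat \<rho> = of_nat Nj * (of_nat s + of_nat n * w)" using w(2)
    by (simp add: algebra_simps)
  moreover have "of_nat s + of_nat n * w \<in> Z" using Zadd[OF Zofnat Znat[OF w(1)]] .
  ultimately show ?thesis unfolding nmult_iff by blast
qed

lemma res_cover: assumes n: "n \<ge> 1" and x: "x - of_nat \<rho> \<in> nmult Z Nj"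
  shows "\<exists>s<n. x - of_nat (\<rho> + Nj * s) \<in> nmult Z (n * Nj)"
proof -
  obtain t where t: "t \<in> Z" "x - of_nat \<rho> = of_nat Nj * t" using x unfolding nmult_iff by blast
  obtain s t' where st: "s < n" "t' \<in> Z" "t = of_nat n * t' + of_nat s" using residue[OF n t(1)] by blast
  have "x - of_nat (\<rho> + Nj * s) = of_nat (n * Nj) * t'" using t(2) st(3) by (simp add: algebra_simps)
  then show ?thesis using st(1,2) unfolding nmult_iff by blast
qed

lemma res_distinct:
  assumes Nj: "Nj \<ge> 1" and s1: "s1 < n" and s2: "s2 < n"
    and h1: "x - of_nat (\<rho> + Nj * s1) \<in> nmult Z (n * Nj)"
    and h2: "x - of_nat (\<rho> + Nj * s2) \<in> nmult Z (n * Nj)"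
  shows "s1 = s2"
proof (rule ccontr)
  assume ne: "s1 \<noteq> s2"
  obtain t1 where t1: "t1 \<in> Z" "x - of_nat (\<rho> + Nj * s1) = of_nat (n * Nj) * t1" using h1 unfolding nmult_iff by blast
  obtain t2 where t2: "t2 \<in> Z" "x - of_nat (\<rho> + Nj * s2) = of_nat (n * Nj) * t2" using h2 unfolding nmult_iff by blast
  have "of_nat Nj * (of_nat s2 - of_nat s1) = of_nat Nj * (of_nat n * (t1 - t2))"
    using t1(2) t2(2) by (simp add: algebra_simps)
  moreover have "(of_nat Nj :: 'k) \<noteq> 0" using Nj by simp
  ultimately have e: "of_nat s2 - of_nat s1 = of_nat n * (t1 - t2)" by simp
  have d: "t1 - t2 \<in> Z" using Zdiff[OF t1(1) t2(1)] .
  have "t1 - t2 \<noteq> 0"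
  proof
    assume "t1 - t2 = 0"
    then have "(of_nat s2::'k) = of_nat s1" using e by simp
    then show False using ne by simp
  qed
  then have "1 \<le> \<bar>t1 - t2\<bar>" using Zpos[OF d] Zpos[OF Zneg[OF d]] by (cases "0 < t1 - t2") (auto simp: abs_if)
  then have "of_nat n \<le> \<bar>of_nat n * (t1 - t2)\<bar>" by (simp add: abs_mult mult_le_cancel_left1)
  also have "\<dots> = \<bar>of_nat s2 - of_nat s1\<bar>" using e by simp
  also have "\<dots> < of_nat n"
  proof -
    have "(of_nat s1::'k) < of_nat n" "(of_nat s2::'k) < of_nat n" using s1 s2 by auto
    moreover have "(0::'k) \<le> of_nat s1" "(0::'k) \<le> of_nat s2" by auto
    ultimately show ?thesis unfolding abs_less_iff by linarith
  qed
  finally show False by simp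
qed

end


context cell begin

lemma cellp: "cell Z N m I A"
  unfolding cell_def cell_axioms_def zg_def using ZG lenN posN Isub AF LVA by blast

lemma main_cell:
  assumes mono: "monohedral Z m A" and ncl: "\<not> is_closed Z m A" and n1: "n \<ge> 1"
  shows "\<exists>N'. length N' = m \<and> (\<forall>k\<in>set N'. k > 0) \<and>
      (\<exists>P :: nat \<Rightarrow> 'k ext list set.
         (\<Union>i\<in>{1..n}. P i) = A \<and>
         (\<forall>i\<in>{1..n}. \<forall>j\<in>{1..n}. i \<noteq> j \<longrightarrow> P i \<inter> P j = {}) \<and>
         (\<forall>i\<in>{1..n}. P i \<noteq> {} \<and> lc_precell Z N' (P i) \<and>
                      frontier_set Z m (P i) = frontier_set Z m A))"
proof -
  have AcA: "A \<subseteq> clos Z m A" using clos_ext_GL[OF A_GL] .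
  obtain b0 where b0: "b0 \<in> clos Z m A" "b0 \<notin> A"
    using ncl AcA unfolding is_closed_def by blast
  define FF where "FF = faces Z m A"
  define R where "R = {(B, C). B \<in> FF \<and> C \<in> FF \<and> B \<subseteq> clos Z m C}"
  have lin: "linear_order_on FF R" using mono unfolding monohedral_def FF_def R_def .
  have trR: "trans R" and reR: "refl_on FF R" and totR: "total_on FF R"
    using lin unfolding linear_order_on_def partial_order_on_def preorder_on_def by auto
  define Fs where "Fs = FF - {A}"
  have face_mem: "Fface Z m {i. i < m \<and> y ! i \<noteq> PInf} A \<in> FF \<and> y \<in> Fface Z m {i. i < m \<and> y ! i \<noteq> PInf} A"
    if y: "y \<in> clos Z m A" for y
  proof -
    have yG: "y \<in> GL m" using clos_GL[OF A_GL y] .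
    have yF: "y \<in> Fgam Z m {i. i < m \<and> y ! i \<noteq> PInf}" using yG unfolding GL_def Fgam_def by auto
    have yin: "y \<in> Fface Z m {i. i < m \<and> y ! i \<noteq> PInf} A" unfolding Fface_def using y yF by blast
    have "{i. i < m \<and> y ! i \<noteq> PInf} \<subseteq> {0..<m}" by auto
    then have "Fface Z m {i. i < m \<and> y ! i \<noteq> PInf} A \<in> FF"
      unfolding FF_def faces_def using yin by blast
    then show ?thesis using yin by blast
  qed
  have finFF: "finite FF"
  proof (rule finite_subset)
    show "FF \<subseteq> (\<lambda>K. Fface Z m K A) ` Pow {0..<m}" unfolding FF_def faces_def by blast
    show "finite ((\<lambda>K. Fface Z m K A) ` Pow {0..<m})" by simp
  qed
  have Fsne: "Fs \<noteq> {}"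
  proof -
    have "Fface Z m {i. i < m \<and> b0 ! i \<noteq> PInf} A \<in> FF" "b0 \<in> Fface Z m {i. i < m \<and> b0 ! i \<noteq> PInf} A"
      using face_mem[OF b0(1)] by auto
    then show ?thesis unfolding Fs_def using b0(2) by blast
  qed
  have "\<exists>F\<in>Fs. \<forall>G\<in>Fs. G \<subseteq> clos Z m F"
  proof (rule chain_max)
    show "finite Fs" unfolding Fs_def using finFF by simp
    show "Fs \<noteq> {}" by (rule Fsne)
    show "\<forall>x\<in>Fs. \<forall>y\<in>Fs. x \<subseteq> clos Z m y \<or> y \<subseteq> clos Z m x"
    proof (intro ballI)
      fix x y assume x: "x \<in> Fs" and y: "y \<in> Fs"
      have xF: "x \<in> FF" and yF: "y \<in> FF" using x y unfolding Fs_def by auto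
      show "x \<subseteq> clos Z m y \<or> y \<subseteq> clos Z m x"
      proof (cases "x = y")
        case True
        have "(x, x) \<in> R" using refl_onD[OF reR xF] .
        then show ?thesis using True unfolding R_def by simp
      next
        case False
        then have "(x, y) \<in> R \<or> (y, x) \<in> R" using totR xF yF unfolding total_on_def by blast
        then show ?thesis unfolding R_def by blast
      qed
    qed
    show "\<forall>x\<in>Fs. \<forall>y\<in>Fs. \<forall>z\<in>Fs. x \<subseteq> clos Z m y \<longrightarrow> y \<subseteq> clos Z m z \<longrightarrow> x \<subseteq> clos Z m z"
    proof (intro ballI impI)
      fix x y z assume x: "x \<in> Fs" and y: "y \<in> Fs" and z: "z \<in> Fs"
        and xy: "x \<subseteq> clos Z m y" and yz: "y \<subseteq> clos Z m z"
      have "(x, y) \<in> R" "(y, z) \<in> R" using x y z xy yz unfolding R_def Fs_def by auto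
      then have "(x, z) \<in> R" using transD[OF trR] by blast
      then show "x \<subseteq> clos Z m z" unfolding R_def by blast
    qed
  qed
  then obtain F where F: "F \<in> Fs" "\<forall>G\<in>Fs. G \<subseteq> clos Z m F" by blast
  obtain K where K: "K \<subseteq> {0..<m}" "F = Fface Z m K A" "F \<noteq> {}"
    using F(1) unfolding Fs_def FF_def faces_def by blast
  have FnA: "F \<noteq> A" using F(1) unfolding Fs_def by blast
  obtain c0 where c0: "c0 \<in> F" using K(3) by blast
  have c0': "c0 \<in> clos Z m A" "c0 \<in> Fgam Z m K" using c0 K(2) unfolding Fface_def by auto
  have KI: "K \<subseteq> I" using face_sub[OF c0'] .
  have KnI: "K \<noteq> I"
  proof
    assume "K = I"
    then have "F = A" using K(2) face_I unfolding Fface_def by simp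
    then show False using FnA by simp
  qed
  have IKne: "I - K \<noteq> {}" using KI KnI by blast
  have "finite I" using Isub by (rule finite_subset) simp
  then have finI: "finite (I - K)" by simp
  define j where "j = Min (I - K)"
  have jIK: "j \<in> I - K" unfolding j_def using Min_in[OF finI IKne] .
  have jmin: "\<forall>i<j. i \<in> I \<longrightarrow> i \<in> K"
  proof (intro allI impI)
    fix i assume ij: "i < j" and iI: "i \<in> I"
    show "i \<in> K"
    proof (rule ccontr)
      assume "i \<notin> K"
      then have "i \<in> I - K" using iI by simp
      then have "j \<le> i" unfolding j_def using Min_le[OF finI] by blast
      then show False using ij by simp
    qed
  qed
  have jm: "j < m" using jIK Isub by auto
  have coreF: "core Z N m I A K b j" if b: "b \<in> F" for b
  proof -
    have "b \<in> clos Z m A" "b \<in> Fgam Z m K" using b K(2) unfolding Fface_def by auto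
    then show ?thesis unfolding core_def core_axioms_def using cellp KI jIK jmin by blast
  qed
  have eI: "{i \<in> {i \<in> I. i < Suc j}. i < j} = {i \<in> I. i < j}" by auto
  obtain \<mu> \<nu> \<rho> where h1: "affine_on Z {i \<in> I. i < j} (D j) \<mu>" and h2: "affine_on Z {i \<in> I. i < j} (D j) \<nu>"
    and h3: "largely_cont Z j (D j) \<mu>" and h4: "largely_cont Z j (D j) \<nu>"
    and h5: "\<forall>y\<in>D j. Fin 0 \<le> \<mu> y \<and> Fin 0 \<le> \<nu> y" and h6: "\<rho> < N ! j"
    and h7: "D (Suc j) = {a \<in> Fgam Z (Suc j) {i \<in> I. i < Suc j}. butlast a \<in> D j \<and>
                 \<mu> (butlast a) \<le> a ! j \<and> a ! j \<le> \<nu> (butlast a) \<and>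
                 cong_ext Z (N ! j) (a ! j) (Fin (of_nat \<rho>))}"
    using lev[OF jm] unfolding lvl_def eI by blast
  have memb: "\<And>a. a \<in> D (Suc j) \<longleftrightarrow> (a \<in> Fgam Z (Suc j) {i \<in> I. i < Suc j} \<and> butlast a \<in> D j \<and>
        \<mu> (butlast a) \<le> a ! j \<and> a ! j \<le> \<nu> (butlast a) \<and> cong_ext Z (N ! j) (a ! j) (Fin (of_nat \<rho>)))"
    using h7 by blast
  define Nj where "Nj = N ! j"
  have Nj1: "Nj \<ge> 1" unfolding Nj_def using N_pos[OF jm] .
  define M where "M = n * Nj"
  define rr where "rr s = \<rho> + Nj * s" for s
  define Q where "Q s = {a \<in> A. cong_ext Z M (a ! j) (Fin (of_nat (rr s)))}" for s
  define N' where "N' = N[j := M]"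
  have fibs: "\<forall>p\<in>D j. \<forall>c\<in>divhull Z. \<exists>x\<in>Z. c < x \<and> p @ [Fin x] \<in> D (Suc j) \<and>
           cong_ext Z M (Fin x) (Fin (of_nat (rr s)))" if s: "s < n" for s
    using core.fib_gen[OF coreF[OF c0] n1 s h2 h4 memb] unfolding M_def rr_def Nj_def .
  have Fclos: "F \<subseteq> clos Z m (Q s)" if s: "s < n" for s
  proof
    fix b assume b: "b \<in> F"
    show "b \<in> clos Z m (Q s)"
      unfolding Q_def using core.core_clos[OF coreF[OF b] fibs[OF s]] .
  qed
  have QA: "Q s \<subseteq> A" for s unfolding Q_def by blast
  have Qne: "Q s \<noteq> {}" if s: "s < n" for s
  proof
    assume "Q s = {}"
    then have "F \<subseteq> {}" using Fclos[OF s] clos_empty by simp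
    then show False using K(3) by simp
  qed
  have jF: "\<And>a. a \<in> A \<Longrightarrow> \<exists>x\<in>Z. a ! j = Fin x"
    using Fgam_nth_I[of _ m I j] AF jIK jm by blast
  have tk_le: "take k ` Q s = D k" if s: "s < n" and k: "k \<le> j" for s k
  proof
    show "take k ` Q s \<subseteq> D k" using QA unfolding D_def by blast
    show "D k \<subseteq> take k ` Q s"
    proof
      fix y assume "y \<in> D k"
      then obtain a where a: "a \<in> A" "y = take k a" unfolding D_def by blast
      have "take j a \<in> D j" using take_D[OF a(1)] .
      then obtain x where x: "x \<in> Z" "take j a @ [Fin x] \<in> D (Suc j)" "cong_ext Z M (Fin x) (Fin (of_nat (rr s)))"
        using fibs[OF s] Zdivhull[OF Z0] by blast
      obtain a' where a': "a' \<in> A" "take j a @ [Fin x] = take (Suc j) a'" using x(2) unfolding D_def by blast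
      have lt: "length (take j a) = j" using A_len[OF a(1)] jm by simp
      have "take (Suc j) a' ! j = a' ! j" by simp
      moreover have "(take j a @ [Fin x]) ! j = Fin x" using snoc_facts[OF lt] by blast
      ultimately have a'j: "a' ! j = Fin x" using a'(2) by simp
      have "a' \<in> Q s" unfolding Q_def using a'(1) a'j x(3) by simp
      moreover have "take k a' = y"
      proof -
        have "take k a' = take k (take (Suc j) a')" using k by simp
        also have "\<dots> = take k (take j a @ [Fin x])" using a'(2) by simp
        also have "\<dots> = take k (take j a)" using lt k by simp
        also have "\<dots> = take k a" using k by simp
        finally show ?thesis using a(2) by simp
      qed
      ultimately show "y \<in> take k ` Q s" by blast
    qed
  qed
  have tk_gt: "take k ` Q s = {y \<in> D k. cong_ext Z M (y ! j) (Fin (of_nat (rr s)))}"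
    if k: "j < k" for s k
  proof
    show "take k ` Q s \<subseteq> {y \<in> D k. cong_ext Z M (y ! j) (Fin (of_nat (rr s)))}"
    proof
      fix y assume "y \<in> take k ` Q s"
      then obtain a where a: "a \<in> Q s" "y = take k a" by blast
      have "take k a ! j = a ! j" using k by simp
      then show "y \<in> {y \<in> D k. cong_ext Z M (y ! j) (Fin (of_nat (rr s)))}"
        using a QA take_D unfolding Q_def by auto
    qed
    show "{y \<in> D k. cong_ext Z M (y ! j) (Fin (of_nat (rr s)))} \<subseteq> take k ` Q s"
    proof
      fix y assume y: "y \<in> {y \<in> D k. cong_ext Z M (y ! j) (Fin (of_nat (rr s)))}"
      then obtain a where a: "a \<in> A" "y = take k a" unfolding D_def by blast
      have "take k a ! j = a ! j" using k by simp
      then have "a \<in> Q s" unfolding Q_def using a y by auto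
      then show "y \<in> take k ` Q s" using a(2) by blast
    qed
  qed
  have lcQ: "lc_precell Z N' (Q s)" if s: "s < n" for s
  proof -
    have lenQ: "\<forall>a\<in>Q s. length a = length N'" unfolding N'_def using QA A_len lenN by auto
    have "LV N' (Q s)"
      unfolding LV_def
    proof (intro conjI allI impI)
      show "Q s \<noteq> {}" by (rule Qne[OF s])
      fix k assume "k < length N'"
      then have km: "k < m" unfolding N'_def using lenN by simp
      have sub1: "take (Suc k) ` Q s \<subseteq> Fgam Z (Suc k) {i \<in> I. i < Suc k}"
      proof -
        have "take (Suc k) ` Q s \<subseteq> D (Suc k)" using QA unfolding D_def by blast
        also have "\<dots> \<subseteq> Fgam Z (Suc k) {i \<in> I. i < Suc k}" using D_Fgam km by simp
        finally show ?thesis .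
      qed
      have lv: "lvl (N' ! k) k {i \<in> I. i < Suc k} (take k ` Q s) (take (Suc k) ` Q s)"
      proof (cases "k < j")
        case True
        have "N' ! k = N ! k" unfolding N'_def using True by simp
        moreover have "take k ` Q s = D k" using tk_le[OF s] True by simp
        moreover have "take (Suc k) ` Q s = D (Suc k)" using tk_le[OF s] True by simp
        ultimately show ?thesis using lev[OF km] by simp
      next
        case False
        show ?thesis
        proof (cases "k = j")
          case True
          have e1: "N' ! j = M" unfolding N'_def using jm lenN by simp
          have e2: "take j ` Q s = D j" using tk_le[OF s] by simp
          have e3: "take (Suc j) ` Q s = {y \<in> D (Suc j). cong_ext Z M (y ! j) (Fin (of_nat (rr s)))}"
            using tk_gt by simp
          have rrM: "rr s < M"
          proof -
            have "rr s < Nj + Nj * s" unfolding rr_def using h6 Nj_def by simp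
            also have "Nj + Nj * s = Nj * Suc s" by simp
            also have "\<dots> \<le> Nj * n" using s by (intro mult_le_mono2) simp
            finally show ?thesis unfolding M_def by (simp add: mult.commute)
          qed
          have seteq: "{y \<in> D (Suc j). cong_ext Z M (y ! j) (Fin (of_nat (rr s)))} =
              {a \<in> Fgam Z (Suc j) {i \<in> I. i < Suc j}. butlast a \<in> D j \<and>
                 \<mu> (butlast a) \<le> a ! j \<and> a ! j \<le> \<nu> (butlast a) \<and>
                 cong_ext Z M (a ! j) (Fin (of_nat (rr s)))}"
          proof (rule set_eqI)
            fix a
            show "a \<in> {y \<in> D (Suc j). cong_ext Z M (y ! j) (Fin (of_nat (rr s)))} \<longleftrightarrow>
              a \<in> {a \<in> Fgam Z (Suc j) {i \<in> I. i < Suc j}. butlast a \<in> D j \<and>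
                 \<mu> (butlast a) \<le> a ! j \<and> a ! j \<le> \<nu> (butlast a) \<and>
                 cong_ext Z M (a ! j) (Fin (of_nat (rr s)))}"
            proof
              assume "a \<in> {y \<in> D (Suc j). cong_ext Z M (y ! j) (Fin (of_nat (rr s)))}"
              then show "a \<in> {a \<in> Fgam Z (Suc j) {i \<in> I. i < Suc j}. butlast a \<in> D j \<and>
                 \<mu> (butlast a) \<le> a ! j \<and> a ! j \<le> \<nu> (butlast a) \<and>
                 cong_ext Z M (a ! j) (Fin (of_nat (rr s)))}" using memb by blast
            next
              assume a: "a \<in> {a \<in> Fgam Z (Suc j) {i \<in> I. i < Suc j}. butlast a \<in> D j \<and>
                 \<mu> (butlast a) \<le> a ! j \<and> a ! j \<le> \<nu> (butlast a) \<and>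
                 cong_ext Z M (a ! j) (Fin (of_nat (rr s)))}"
              have cN: "cong_ext Z (N ! j) (a ! j) (Fin (of_nat \<rho>))"
              proof (cases "a ! j")
                case PInf
                then show ?thesis by simp
              next
                case (Fin x)
                then have "x - of_nat (\<rho> + Nj * s) \<in> nmult Z (n * Nj)"
                  using a unfolding M_def rr_def by simp
                then have "x - of_nat \<rho> \<in> nmult Z Nj" by (rule congM_N)
                then show ?thesis using Fin unfolding Nj_def by simp
              qed
              then show "a \<in> {y \<in> D (Suc j). cong_ext Z M (y ! j) (Fin (of_nat (rr s)))}"
                using a memb by blast
            qed
          qed
          show ?thesis unfolding True e1 e2 e3 lvl_def seteq eI
            apply (rule exI[of _ \<mu>], rule exI[of _ \<nu>], rule exI[of _ "rr s"])
            using h1 h2 h3 h4 h5 rrM by blast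
        next
          case False
          then have jk: "j < k" using \<open>\<not> k < j\<close> by simp
          have e1: "N' ! k = N ! k" unfolding N'_def using False by simp
          define Dk' where "Dk' = {y \<in> D k. cong_ext Z M (y ! j) (Fin (of_nat (rr s)))}"
          have e2: "take k ` Q s = Dk'" using tk_gt[OF jk] unfolding Dk'_def by simp
          have e3: "take (Suc k) ` Q s = {a \<in> D (Suc k). butlast a \<in> Dk'}"
          proof -
            have "take (Suc k) ` Q s = {y \<in> D (Suc k). cong_ext Z M (y ! j) (Fin (of_nat (rr s)))}"
              using tk_gt jk by simp
            also have "\<dots> = {a \<in> D (Suc k). butlast a \<in> Dk'}"
            proof (rule set_eqI)
              fix a
              show "a \<in> {y \<in> D (Suc k). cong_ext Z M (y ! j) (Fin (of_nat (rr s)))} \<longleftrightarrow>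
                    a \<in> {a \<in> D (Suc k). butlast a \<in> Dk'}"
              proof (cases "a \<in> D (Suc k)")
                case True
                have la: "length a = Suc k" using D_len[of "Suc k" a] km True by simp
                have "butlast a ! j = a ! j" using la jk by (simp add: nth_butlast)
                moreover have "butlast a \<in> D k" using butlast_D[OF km True] .
                ultimately show ?thesis unfolding Dk'_def using True by simp
              next
                case False
                then show ?thesis by simp
              qed
            qed
            finally show ?thesis .
          qed
          have "Dk' \<subseteq> D k" unfolding Dk'_def by blast
          then show ?thesis unfolding e1 e2 e3 using lvl_restrict[OF lev[OF km]] by blast
        qed
      qed
      show "Qd N' (Q s) k" unfolding Qd_def using sub1 lv by (intro exI[of _ "{i \<in> I. i < Suc k}"]) auto
    qed
    then show ?thesis using lc_LV[OF lenQ] by simp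
  qed
  have frontQ: "frontier_set Z m (Q s) = frontier_set Z m A" if s: "s < n" for s
  proof
    have "clos Z m (Q s) - Q s \<subseteq> clos Z m A - A"
    proof
      fix x assume x: "x \<in> clos Z m (Q s) - Q s"
      have xA: "x \<in> clos Z m A" using x clos_mono[OF QA] by blast
      have "x \<notin> A" using clos_sub_restrict[OF QA] x by blast
      then show "x \<in> clos Z m A - A" using xA by blast
    qed
    then show "frontier_set Z m (Q s) \<subseteq> frontier_set Z m A"
      unfolding frontier_set_def by (rule clos_mono)
    have s1: "clos Z m A - A \<subseteq> clos Z m F"
    proof
      fix y assume y: "y \<in> clos Z m A - A"
      have G: "Fface Z m {i. i < m \<and> y ! i \<noteq> PInf} A \<in> FF" "y \<in> Fface Z m {i. i < m \<and> y ! i \<noteq> PInf} A"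
        using face_mem y by auto
      then have "Fface Z m {i. i < m \<and> y ! i \<noteq> PInf} A \<in> Fs" unfolding Fs_def using y by blast
      then show "y \<in> clos Z m F" using F(2) G(2) by blast
    qed
    have s2: "F \<subseteq> clos Z m (Q s) - Q s"
    proof
      fix b assume b: "b \<in> F"
      have "b \<in> clos Z m (Q s)" using Fclos[OF s] b by blast
      moreover have "b \<notin> Q s"
      proof
        assume "b \<in> Q s"
        then have "b \<in> Fgam Z m I" using QA AF by blast
        moreover have "b \<in> Fgam Z m K" using b K(2) unfolding Fface_def by blast
        ultimately have "I = K" by (rule Fgam_unique)
        then show False using KnI by simp
      qed
      ultimately show "b \<in> clos Z m (Q s) - Q s" by blast
    qed
    have "frontier_set Z m A \<subseteq> clos Z m (clos Z m F)"
      unfolding frontier_set_def by (rule clos_mono[OF s1])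
    also have "\<dots> = clos Z m F" by (rule clos_idem)
    also have "\<dots> \<subseteq> frontier_set Z m (Q s)" unfolding frontier_set_def by (rule clos_mono[OF s2])
    finally show "frontier_set Z m A \<subseteq> frontier_set Z m (Q s)" .
  qed
  define P where "P i = Q (i - 1)" for i
  have cover: "(\<Union>i\<in>{1..n}. P i) = A"
  proof
    show "(\<Union>i\<in>{1..n}. P i) \<subseteq> A" unfolding P_def using QA by blast
    show "A \<subseteq> (\<Union>i\<in>{1..n}. P i)"
    proof
      fix a assume a: "a \<in> A"
      obtain x where x: "x \<in> Z" "a ! j = Fin x" using jF[OF a] by blast
      have "take (Suc j) a \<in> D (Suc j)" using take_D[OF a] .
      then have "cong_ext Z (N ! j) (take (Suc j) a ! j) (Fin (of_nat \<rho>))" using memb by blast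
      then have "x - of_nat \<rho> \<in> nmult Z Nj" using x(2) unfolding Nj_def by simp
      then obtain s where s: "s < n" "x - of_nat (\<rho> + Nj * s) \<in> nmult Z (n * Nj)"
        using res_cover[OF n1] by blast
      have "a \<in> Q s" unfolding Q_def M_def rr_def using a s(2) x(2) by simp
      then have "a \<in> P (Suc s)" unfolding P_def by simp
      moreover have "Suc s \<in> {1..n}" using s(1) by simp
      ultimately show "a \<in> (\<Union>i\<in>{1..n}. P i)" by blast
    qed
  qed
  have disj: "\<forall>i\<in>{1..n}. \<forall>i'\<in>{1..n}. i \<noteq> i' \<longrightarrow> P i \<inter> P i' = {}"
  proof (intro ballI impI)
    fix i i' assume i: "i \<in> {1..n}" and i': "i' \<in> {1..n}" and ne: "i \<noteq> i'"
    show "P i \<inter> P i' = {}"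
    proof (rule ccontr)
      assume "P i \<inter> P i' \<noteq> {}"
      then obtain a where a: "a \<in> Q (i - 1)" "a \<in> Q (i' - 1)" unfolding P_def by blast
      obtain x where x: "x \<in> Z" "a ! j = Fin x" using jF a(1) QA by blast
      have h1: "x - of_nat (\<rho> + Nj * (i - 1)) \<in> nmult Z (n * Nj)"
        using a(1) x(2) unfolding Q_def M_def rr_def by simp
      have h2: "x - of_nat (\<rho> + Nj * (i' - 1)) \<in> nmult Z (n * Nj)"
        using a(2) x(2) unfolding Q_def M_def rr_def by simp
      have "i - 1 < n" "i' - 1 < n" using i i' by auto
      then have "i - 1 = i' - 1" using res_distinct[OF Nj1 _ _ h1 h2] by blast
      then show False using ne i i' by auto
    qed
  qed
  have N'1: "length N' = m" unfolding N'_def length_list_update by (rule lenN)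
  have N'2: "\<forall>k\<in>set N'. k > 0"
  proof
    fix k assume "k \<in> set N'"
    then have "k \<in> insert M (set N)" unfolding N'_def using set_update_subset_insert[of N j M] by blast
    moreover have "M > 0" unfolding M_def using n1 Nj1 by simp
    ultimately show "k > 0" using posN by blast
  qed
  have allP: "\<forall>i\<in>{1..n}. P i \<noteq> {} \<and> lc_precell Z N' (P i) \<and> frontier_set Z m (P i) = frontier_set Z m A"
  proof
    fix i assume i: "i \<in> {1..n}"
    then have s: "i - 1 < n" by auto
    show "P i \<noteq> {} \<and> lc_precell Z N' (P i) \<and> frontier_set Z m (P i) = frontier_set Z m A"
      unfolding P_def using Qne[OF s] lcQ[OF s] frontQ[OF s] by blast
  qed
  have "(\<Union>i\<in>{1..n}. P i) = A \<and>
         (\<forall>i\<in>{1..n}. \<forall>j\<in>{1..n}. i \<noteq> j \<longrightarrow> P i \<inter> P j = {}) \<and>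
         (\<forall>i\<in>{1..n}. P i \<noteq> {} \<and> lc_precell Z N' (P i) \<and>
                      frontier_set Z m (P i) = frontier_set Z m A)"
    using cover disj allP by (intro conjI)
  then have ex: "\<exists>P :: nat \<Rightarrow> 'k ext list set. (\<Union>i\<in>{1..n}. P i) = A \<and>
         (\<forall>i\<in>{1..n}. \<forall>j\<in>{1..n}. i \<noteq> j \<longrightarrow> P i \<inter> P j = {}) \<and>
         (\<forall>i\<in>{1..n}. P i \<noteq> {} \<and> lc_precell Z N' (P i) \<and>
                      frontier_set Z m (P i) = frontier_set Z m A)"
    by (rule exI[of _ P])
  show ?thesis using N'1 N'2 ex by (intro exI[of _ N'] conjI)
qed

end



theorem proposition5p5:
  fixes Z :: "'k::linordered_field set"
    and N :: "nat list" and m :: nat and I :: "nat set"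
    and A :: "'k ext list set"
  assumes "Zgroup Z"
    and "length N = m" and "\<forall>k\<in>set N. k > 0"
    and "I \<subseteq> {0..<m}" and "A \<subseteq> Fgam Z m I"
    and "lc_precell Z N A"
    and "monohedral Z m A"
    and "\<not> is_closed Z m A"
  shows "\<forall>n::nat. n \<ge> 1 \<longrightarrow>
    (\<exists>N'. length N' = m \<and> (\<forall>k\<in>set N'. k > 0) \<and>
      (\<exists>P :: nat \<Rightarrow> 'k ext list set.
         (\<Union>i\<in>{1..n}. P i) = A \<and>
         (\<forall>i\<in>{1..n}. \<forall>j\<in>{1..n}. i \<noteq> j \<longrightarrow> P i \<inter> P j = {}) \<and>
         (\<forall>i\<in>{1..n}. P i \<noteq> {} \<and> lc_precell Z N' (P i) \<and>
                      frontier_set Z m (P i) = frontier_set Z m A)))"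
proof (intro allI impI)
  fix n :: nat assume n1: "n \<ge> 1"
  have zgZ: "zg Z" by (rule zg.intro) (rule assms(1))
  have lenA: "\<forall>a\<in>A. length a = length N" using assms(2,5) unfolding Fgam_def by auto
  have LVA: "zg.LV Z N A" using zg.lc_LV[OF zgZ lenA] assms(6) by simp
  have cl: "cell Z N m I A"
    unfolding cell_def cell_axioms_def using zgZ assms(2,3,4,5) LVA by blast
  show "\<exists>N'. length N' = m \<and> (\<forall>k\<in>set N'. k > 0) \<and>
      (\<exists>P :: nat \<Rightarrow> 'k ext list set.
         (\<Union>i\<in>{1..n}. P i) = A \<and>
         (\<forall>i\<in>{1..n}. \<forall>j\<in>{1..n}. i \<noteq> j \<longrightarrow> P i \<inter> P j = {}) \<and>
         (\<forall>i\<in>{1..n}. P i \<noteq> {} \<and> lc_precell Z N' (P i) \<and>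
                      frontier_set Z m (P i) = frontier_set Z m A))"
    by (rule cell.main_cell[OF cl assms(7) assms(8) n1])
qed

end
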